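(* Let $k\ge0$, $\hat y\in Y$, and $\bar\lambda_k=\lambda+\frac{2\tau_k\mathsf D^k}{k!}\mathbb 1\{k\ge1\}$. Assume: (i) $\nabla_x f$ exists and $\|\nabla_x f(x',y')-\nabla_x f(x,y)\|\le\lambda\|x'-x\|+\mu\|y'-y\|$ for all $x,x'\in X$, $y,y'\in Y$; (ii) $\nabla^k_{y\cdots y}f$ exists and $\|\nabla^k_{y\cdots y}f(x',y')-\nabla^k_{y\cdots y}f(x,y)\|\le\rho_k\|y'-y\|+\sigma_k\|x'-x\|$ (possibly with $\rho_k=\infty$), and $\nabla^k_{y\cdots y}f(\cdot,y)$ is absolutely continuous for every $y$; (iii) if $k\ge1$: $\nabla^{k+1}_{xy\cdots y}f$ exists with $\|\nabla^{k+1}_{xy\cdots y}f(x',y)-\nabla^{k+1}_{xy\cdots y}f(x,y)\|\le\tau_k\|x'-x\|$, the set $\{(x,y):x\in X,y\in Y'_x\}$ is Lebesgue measurable where $Y'_x$ is the set of $y$ at which $\nabla^{k+2}_{xxy\cdots y}f(x,y)$ does not exist, and $\nabla^k_{y\cdots y}f(x,\cdot)$ is continuous for every $x$. Then for any $x^*\in X$ with $\|\nabla\hat\varphi_{2\bar\lambda_k}(x^* )\|\le\varepsilon$, $$\|\nabla\varphi_{2\bar\lambda_k}(x^* )-\nabla\hat\varphi_{2\bar\lambda_k}(x^* )\|\le\begin{cases}4\Big(\mu\mathsf D+\dfrac{2\sigma_k\mathsf D^k}{k!}+\varepsilon\Big)&\text{when }k\ge1,\\[4pt] 4\big(\min\{\mu\mathsf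 D,2\sigma_0\}+\varepsilon\big)&\text{when }k=0.\end{cases}$$
   Context: Let $E_x,E_y$ be finite-dimensional Euclidean spaces with Euclidean norms; for tensors $\|\cdot\|$ is the induced operator norm. Let $X\subseteq E_x$, $Y\subseteq E_y$ be convex with nonempty interior, $Y$ compact, $\mathsf D\ge\mathrm{diam}(Y)$, $f:X\times Y\to\mathbb R$. $\nabla^j_{y\cdots y}f$ denotes the tensor of $j$-th order partial derivatives in $y$, and $\nabla^{k+1}_{xy\cdots y}f$, $\nabla^{k+2}_{xxy\cdots y}f$ those with additionally one, resp. two, derivatives in $x$. For $\hat y\in Y$, $\hat f_k(x,y)=\sum_{j=0}^k\frac1{j!}\nabla^j_{y\cdots y}f(x,\hat y)[(y-\hat y)^j]$ ($T[v^j]=T[v,\dots,v]$). Primal functions: $\varphi(x)=\max_{y\in Y}f(x,y)$, $\hat\varphi(x)=\max_{y\in Y}\hat f_k(x,y)$. For a function $\phi:X\to\mathbb R$ that is $c$-weakly convex ($\phi+\frac c2\|\cdot\|^2$ convex) with $c<\bar\lambda$, the Moreau envelope is $\phi_{\bar\lambda}(x)=\min_{u\in X}\{\phi(u)+\frac{\bar\lambda}2\|u-x\|^2\}$, which is differentiable. *)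

theory Defs
  imports "HOL-Analysis.Analysis"
begin

text \<open>A j-linear form on E_y (a tensor of order j) is represented as a function of a
list of j vectors.\<close>
definition tnorm :: "nat \<Rightarrow> ('b::real_normed_vector list \<Rightarrow> real) \<Rightarrow> real" where
  "tnorm j T = (SUP vs \<in> {vs. length vs = j \<and> (\<forall>v\<in>set vs. norm v \<le> 1)}. \<bar>T vs\<bar>)"

definition tnorm_x :: "nat \<Rightarrow> ('a::real_normed_vector \<Rightarrow> 'b::real_normed_vector list \<Rightarrow> real) \<Rightarrow> real" where
  "tnorm_x j T = (SUP p \<in> {(u, vs). norm u \<le> 1 \<and> length vs = j \<and> (\<forall>v\<in>set vs. norm v \<le> 1)}.
                     \<bar>T (fst p) (snd p)\<bar>)"

definition abs_cont_on :: "real set \<Rightarrow> (real \<Rightarrow> real) \<Rightarrow> bool" where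
  "abs_cont_on S g \<longleftrightarrow> (\<forall>e>0. \<exists>d>0. \<forall>n (a::nat \<Rightarrow> real) b.
      (\<forall>i<n. a i \<in> S \<and> b i \<in> S \<and> a i \<le> b i \<and> {a i..b i} \<subseteq> S) \<and>
      (\<forall>i<n. \<forall>j<n. i \<noteq> j \<longrightarrow> b i \<le> a j \<or> b j \<le> a i) \<and>
      (\<Sum>i<n. b i - a i) < d \<longrightarrow> (\<Sum>i<n. \<bar>g (b i) - g (a i)\<bar>) < e)"

text \<open>Absolute continuity of a tensor-valued function on a convex set X of the
multi-dimensional space E_x: along every segment in X, every component is absolutely
continuous.\<close>
definition tensor_abs_cont_on :: "'a::real_normed_vector set \<Rightarrow> ('a \<Rightarrow> 'c \<Rightarrow> real) \<Rightarrow> bool" where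
  "tensor_abs_cont_on X T \<longleftrightarrow> (\<forall>x\<in>X. \<forall>x'\<in>X. \<forall>vs.
      abs_cont_on {0..1} (\<lambda>t. T (x + t *\<^sub>R (x' - x)) vs))"

definition grad :: "('a::real_inner \<Rightarrow> real) \<Rightarrow> 'a \<Rightarrow> 'a" where
  "grad F x = (SOME g. (F has_derivative (\<lambda>h. g \<bullet> h)) (at x))"

definition moreau :: "('a::real_normed_vector \<Rightarrow> real) \<Rightarrow> 'a set \<Rightarrow> real \<Rightarrow> 'a \<Rightarrow> real" where
  "moreau phi X lb x = (INF u\<in>X. phi u + lb / 2 * (norm (u - x))\<^sup>2)"

end

theory Submission
  imports Defs
begin

definition mlin :: "nat \<Rightarrow> ('b::real_normed_vector list \<Rightarrow> real) \<Rightarrow> bool" where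
  "mlin n T \<longleftrightarrow> (\<forall>vs i. length vs = n \<longrightarrow> i < n \<longrightarrow> linear (\<lambda>v. T (vs[i := v])))"

lemma mlin_0[simp]: "mlin 0 T"
  by (simp add: mlin_def)

lemma mlin_Suc: "mlin (Suc n) T \<longleftrightarrow>
   (\<forall>ws. length ws = n \<longrightarrow> linear (\<lambda>h. T (h # ws))) \<and> (\<forall>h. mlin n (\<lambda>ws. T (h # ws)))"
proof
  assume A: "mlin (Suc n) T"
  show "(\<forall>ws. length ws = n \<longrightarrow> linear (\<lambda>h. T (h # ws))) \<and> (\<forall>h. mlin n (\<lambda>ws. T (h # ws)))"
  proof (intro conjI allI impI)
    fix ws :: "'a list" assume "length ws = n"
    then show "linear (\<lambda>h. T (h # ws))"
      using A[unfolded mlin_def, rule_format, of "undefined # ws" 0] by simp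
  next
    fix h :: 'a
    show "mlin n (\<lambda>ws. T (h # ws))"
      unfolding mlin_def
    proof (intro allI impI)
      fix vs :: "'a list" and i assume "length vs = n" "i < n"
      then show "linear (\<lambda>v. T (h # vs[i := v]))"
        using A[unfolded mlin_def, rule_format, of "h # vs" "Suc i"] by simp
    qed
  qed
next
  assume B: "(\<forall>ws. length ws = n \<longrightarrow> linear (\<lambda>h. T (h # ws))) \<and> (\<forall>h. mlin n (\<lambda>ws. T (h # ws)))"
  show "mlin (Suc n) T"
    unfolding mlin_def
  proof (intro allI impI)
    fix vs :: "'a list" and i assume L: "length vs = Suc n" "i < Suc n"
    then obtain h ws where vs: "vs = h # ws" "length ws = n" by (cases vs) auto
    show "linear (\<lambda>v. T (vs[i := v]))"
    proof (cases i)
      case 0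
      then show ?thesis using B vs by simp
    next
      case (Suc i')
      then have "i' < n" using L by simp
      then show ?thesis using B vs Suc unfolding mlin_def by simp
    qed
  qed
qed

lemma mlin_homog: "mlin n T \<Longrightarrow> length vs = n \<Longrightarrow> T (map (\<lambda>v. c *\<^sub>R v) vs) = c ^ n * T vs"
proof (induction n arbitrary: T vs)
  case 0
  then show ?case by simp
next
  case (Suc n)
  then obtain h ws where vs: "vs = h # ws" "length ws = n" by (cases vs) auto
  have lin: "linear (\<lambda>h. T (h # map (\<lambda>v. c *\<^sub>R v) ws))"
    using Suc.prems vs unfolding mlin_Suc by simp
  have "T (map (\<lambda>v. c *\<^sub>R v) vs) = c * T (h # map (\<lambda>v. c *\<^sub>R v) ws)"
    using linear_scale[OF lin, of c h] vs by simp
  also have "T (h # map (\<lambda>v. c *\<^sub>R v) ws) = c ^ n * T (h # ws)"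
    using Suc.IH[of "\<lambda>ws. T (h # ws)" ws] Suc.prems vs unfolding mlin_Suc by simp
  finally show ?case using vs by simp
qed

lemma mlin_zero: "mlin (Suc n) T \<Longrightarrow> length ws = n \<Longrightarrow> T (0 # ws) = 0"
  unfolding mlin_Suc using linear_0 by blast

lemma mlin_comb:
  assumes "mlin n T1" "mlin n T2"
  shows "mlin n (\<lambda>vs. a * T1 vs + b * T2 vs)"
  unfolding mlin_def
proof (intro allI impI)
  fix vs :: "'a list" and i assume "length vs = n" "i < n"
  then have l1: "linear (\<lambda>v. T1 (vs[i := v]))" and l2: "linear (\<lambda>v. T2 (vs[i := v]))"
    using assms unfolding mlin_def by auto
  show "linear (\<lambda>v. a * T1 (vs[i := v]) + b * T2 (vs[i := v]))"
    by (rule linearI) (simp_all add: linear_add[OF l1] linear_add[OF l2] linear_scale[OF l1] linear_scale[OF l2] algebra_simps)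
qed

lemma linear_real_expand:
  fixes f :: "'a::euclidean_space \<Rightarrow> real"
  assumes "linear f"
  shows "f h = (\<Sum>b\<in>Basis. (h \<bullet> b) * f b)"
proof -
  have "f h = f (\<Sum>b\<in>Basis. (h \<bullet> b) *\<^sub>R b)" by (simp add: euclidean_representation)
  also have "\<dots> = (\<Sum>b\<in>Basis. (h \<bullet> b) * f b)"
    by (simp add: linear_sum[OF assms] linear_scale[OF assms])
  finally show ?thesis .
qed

lemma linear_real_bound:
  fixes f :: "'a::euclidean_space \<Rightarrow> real"
  assumes "linear f" "norm h \<le> 1" "\<And>b. b \<in> Basis \<Longrightarrow> \<bar>f b\<bar> \<le> B b"
  shows "\<bar>f h\<bar> \<le> (\<Sum>b\<in>Basis. B b)"
proof -
  have "\<bar>f h\<bar> = \<bar>\<Sum>b\<in>Basis. (h \<bullet> b) * f b\<bar>" using linear_real_expand[OF assms(1), of h] by simp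
  also have "\<dots> \<le> (\<Sum>b\<in>Basis. \<bar>(h \<bullet> b) * f b\<bar>)" by (rule sum_abs)
  also have "\<dots> \<le> (\<Sum>b\<in>Basis. B b)"
  proof (rule sum_mono)
    fix b :: 'a assume b: "b \<in> Basis"
    have "\<bar>h \<bullet> b\<bar> \<le> 1" using Basis_le_norm[OF b, of h] assms(2) by simp
    then have "\<bar>h \<bullet> b\<bar> * \<bar>f b\<bar> \<le> 1 * B b"
      using assms(3)[OF b] by (intro mult_mono) auto
    then show "\<bar>(h \<bullet> b) * f b\<bar> \<le> B b" by (simp add: abs_mult)
  qed
  finally show ?thesis .
qed

lemma mlin_bounded:
  fixes T :: "'a::euclidean_space list \<Rightarrow> real"
  shows "mlin n T \<Longrightarrow> \<exists>B. \<forall>vs. length vs = n \<longrightarrow> (\<forall>v\<in>set vs. norm v \<le> 1) \<longrightarrow> \<bar>T vs\<bar> \<le> B"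
proof (induction n arbitrary: T)
  case 0
  then show ?case by (intro exI[of _ "\<bar>T []\<bar>"]) simp
next
  case (Suc n)
  have "\<forall>b. \<exists>B. \<forall>ws. length ws = n \<longrightarrow> (\<forall>v\<in>set ws. norm v \<le> 1) \<longrightarrow> \<bar>T (b # ws)\<bar> \<le> B"
    using Suc.IH Suc.prems unfolding mlin_Suc by blast
  then obtain Bf where Bf0: "\<forall>b. \<forall>ws. length ws = n \<longrightarrow> (\<forall>v\<in>set ws. norm v \<le> 1) \<longrightarrow> \<bar>T (b # ws)\<bar> \<le> Bf b"
    by (metis choice)
  have Bf: "\<bar>T (b # ws)\<bar> \<le> Bf b" if "length ws = n" "\<forall>v\<in>set ws. norm v \<le> 1" for b ws
    using Bf0 that by blast
  show ?case
  proof (intro exI[of _ "\<Sum>b\<in>Basis. Bf b"] allI impI)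
    fix vs :: "'a list" assume "length vs = Suc n" "\<forall>v\<in>set vs. norm v \<le> 1"
    then obtain h ws where vs: "vs = h # ws" "length ws = n" "norm h \<le> 1" "\<forall>v\<in>set ws. norm v \<le> 1"
      by (cases vs) auto
    have lin: "linear (\<lambda>h. T (h # ws))" using Suc.prems vs unfolding mlin_Suc by simp
    have "\<bar>T (h # ws)\<bar> \<le> (\<Sum>b\<in>Basis. Bf b)"
      by (rule linear_real_bound[OF lin vs(3)]) (rule Bf[OF vs(2,4)])
    then show "\<bar>T vs\<bar> \<le> (\<Sum>b\<in>Basis. Bf b)" using vs(1) by simp
  qed
qed

lemma tnorm_ge:
  fixes T :: "'a::euclidean_space list \<Rightarrow> real"
  assumes "mlin n T" "length vs = n" "\<forall>v\<in>set vs. norm v \<le> 1"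
  shows "\<bar>T vs\<bar> \<le> tnorm n T"
proof -
  obtain B where B: "\<forall>vs. length vs = n \<longrightarrow> (\<forall>v\<in>set vs. norm v \<le> 1) \<longrightarrow> \<bar>T vs\<bar> \<le> B"
    using mlin_bounded[OF assms(1)] by blast
  let ?P = "{vs. length vs = n \<and> (\<forall>v\<in>set vs. norm v \<le> 1)}"
  have bdd: "bdd_above ((\<lambda>vs. \<bar>T vs\<bar>) ` ?P)"
    by (rule bdd_aboveI2[where M=B]) (use B in auto)
  have mem: "vs \<in> ?P" using assms by simp
  show ?thesis unfolding tnorm_def
    using cSUP_upper[OF mem bdd] by simp
qed

lemma tnorm_x_ge:
  fixes T :: "'a::euclidean_space \<Rightarrow> 'b::euclidean_space list \<Rightarrow> real"
  assumes lin: "\<And>vs. length vs = n \<Longrightarrow> linear (\<lambda>u. T u vs)" and ml: "\<And>u. mlin n (T u)"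
    and "norm u \<le> 1" "length vs = n" "\<forall>v\<in>set vs. norm v \<le> 1"
  shows "\<bar>T u vs\<bar> \<le> tnorm_x n T"
proof -
  have "\<forall>b. \<exists>B. \<forall>vs. length vs = n \<longrightarrow> (\<forall>v\<in>set vs. norm v \<le> 1) \<longrightarrow> \<bar>T b vs\<bar> \<le> B"
    using mlin_bounded[OF ml] by blast
  then obtain Bf where Bf0: "\<forall>b. \<forall>vs. length vs = n \<longrightarrow> (\<forall>v\<in>set vs. norm v \<le> 1) \<longrightarrow> \<bar>T b vs\<bar> \<le> Bf b"
    by (metis choice)
  have Bf: "\<bar>T b vs\<bar> \<le> Bf b" if "length vs = n" "\<forall>v\<in>set vs. norm v \<le> 1" for b vs
    using Bf0 that by blast
  have bnd: "\<bar>T u' vs'\<bar> \<le> (\<Sum>b\<in>Basis. Bf b)" if "norm u' \<le> 1" "length vs' = n" "\<forall>v\<in>set vs'. norm v \<le> 1" for u' vs'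
    by (rule linear_real_bound[OF lin[OF that(2)] that(1)]) (rule Bf[OF that(2,3)])
  let ?P = "{(u, vs). norm u \<le> 1 \<and> length vs = n \<and> (\<forall>v\<in>set vs. norm v \<le> 1)}"
  have bdd: "bdd_above ((\<lambda>p. \<bar>T (fst p) (snd p)\<bar>) ` ?P)"
  proof (rule bdd_aboveI2[where M="\<Sum>b\<in>Basis. Bf b"])
    fix p :: "'a \<times> 'b list" assume p: "p \<in> ?P"
    obtain u' vs' where pe: "p = (u', vs')" by (cases p)
    have c: "norm u' \<le> 1" "length vs' = n" "\<forall>v\<in>set vs'. norm v \<le> 1" using p pe by simp_all
    show "\<bar>T (fst p) (snd p)\<bar> \<le> (\<Sum>b\<in>Basis. Bf b)" using bnd[OF c] pe by simp
  qed
  have mem: "(u, vs) \<in> ?P" using assms by simp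
  show ?thesis unfolding tnorm_x_def
    using cSUP_upper[OF mem bdd] by simp
qed

lemma seg_in: "convex S \<Longrightarrow> x \<in> S \<Longrightarrow> w \<in> S \<Longrightarrow> 0 \<le> t \<Longrightarrow> t \<le> 1 \<Longrightarrow> x + t *\<^sub>R (w - x) \<in> S"
proof -
  assume a: "convex S" "x \<in> S" "w \<in> S" "0 \<le> t" "t \<le> 1"
  have "(1 - t) *\<^sub>R x + t *\<^sub>R w \<in> S" using a convexD_alt by blast
  moreover have "(1 - t) *\<^sub>R x + t *\<^sub>R w = x + t *\<^sub>R (w - x)" by (simp add: algebra_simps)
  ultimately show ?thesis by simp
qed

lemma path_deriv:
  "((\<lambda>t. x + t *\<^sub>R (w - x)) has_derivative (\<lambda>t. t *\<^sub>R (w - x))) (at t within S)"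
  by (auto intro!: derivative_eq_intros)

lemma deriv_unique_convex:
  fixes f :: "'a::euclidean_space \<Rightarrow> real"
  assumes S: "convex S" "interior S \<noteq> {}" and x: "x \<in> S"
    and d1: "(f has_derivative f1) (at x within S)" and d2: "(f has_derivative f2) (at x within S)"
  shows "f1 = f2"
proof -
  have bl1: "linear f1" using d1 has_derivative_linear by blast
  have bl2: "linear f2" using d2 has_derivative_linear by blast
  have key: "f1 (w - x) = f2 (w - x)" if w: "w \<in> S" for w
  proof -
    let ?g = "\<lambda>t::real. x + t *\<^sub>R (w - x)"
    have img: "?g ` {0..1} \<subseteq> S" using seg_in[OF S(1) x w] by auto
    have g0: "?g 0 = x" by simp
    have "((f \<circ> ?g) has_derivative (f1 \<circ> (\<lambda>t. t *\<^sub>R (w - x)))) (at 0 within {0..1})"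
      by (rule diff_chain_within[OF path_deriv]) (use has_derivative_subset[OF d1 img] in simp)
    moreover have "(f1 \<circ> (\<lambda>t. t *\<^sub>R (w - x))) = (\<lambda>t. t *\<^sub>R f1 (w - x))"
      by (auto simp: linear_scale[OF bl1])
    ultimately have v1: "((f \<circ> ?g) has_vector_derivative f1 (w - x)) (at 0 within cbox 0 1)"
      by (simp add: has_vector_derivative_def cbox_interval)
    have "((f \<circ> ?g) has_derivative (f2 \<circ> (\<lambda>t. t *\<^sub>R (w - x)))) (at 0 within {0..1})"
      by (rule diff_chain_within[OF path_deriv]) (use has_derivative_subset[OF d2 img] in simp)
    moreover have "(f2 \<circ> (\<lambda>t. t *\<^sub>R (w - x))) = (\<lambda>t. t *\<^sub>R f2 (w - x))"
      by (auto simp: linear_scale[OF bl2])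
    ultimately have v2: "((f \<circ> ?g) has_vector_derivative f2 (w - x)) (at 0 within cbox 0 1)"
      by (simp add: has_vector_derivative_def cbox_interval)
    show ?thesis
      by (rule vector_derivative_unique_within_closed_interval[OF _ _ v1 v2]) (auto simp: cbox_interval)
  qed
  obtain c where c: "c \<in> interior S" using S(2) by blast
  then obtain e where e: "e > 0" "ball c e \<subseteq> S" using mem_interior by blast
  show ?thesis
  proof
    fix v :: 'a
    define s where "s = e / 2 / (norm v + 1)"
    have s: "s > 0" using e unfolding s_def by (intro divide_pos_pos) (auto intro: add_nonneg_pos)
    have "norm (s *\<^sub>R v) < e"
    proof -
      have "norm (s *\<^sub>R v) = s * norm v" using s by simp
      also have "\<dots> = e / 2 * (norm v / (norm v + 1))" unfolding s_def by simp
      also have "\<dots> \<le> e / 2 * 1"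
        using e by (intro mult_left_mono) (auto simp: divide_le_eq_1 add_nonneg_pos)
      also have "\<dots> = e / 2" by simp
      finally show ?thesis using e by simp
    qed
    then have w2: "c + s *\<^sub>R v \<in> S" using e by (auto simp: dist_norm intro!: subsetD[OF e(2)])
    have w1: "c \<in> S" using e by auto
    have "f1 ((c + s *\<^sub>R v) - x) - f1 (c - x) = f2 ((c + s *\<^sub>R v) - x) - f2 (c - x)"
      using key[OF w1] key[OF w2] by simp
    moreover have "(c + s *\<^sub>R v) - x = (c - x) + s *\<^sub>R v" by (simp add: algebra_simps)
    ultimately have "s * f1 v = s * f2 v"
      by (simp add: linear_add[OF bl1] linear_add[OF bl2] linear_scale[OF bl1] linear_scale[OF bl2])
    then show "f1 v = f2 v" using s by simp
  qed
qed

lemma deriv_mlin: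
  fixes F :: "'a::euclidean_space \<Rightarrow> 'b::real_normed_vector list \<Rightarrow> real"
  assumes S: "convex S" "interior S \<noteq> {}" and x: "x \<in> S"
    and ml: "\<And>x'. x' \<in> S \<Longrightarrow> mlin n (F x')"
    and d: "\<And>vs. length vs = n \<Longrightarrow> ((\<lambda>x'. F x' vs) has_derivative (\<lambda>h. F' h vs)) (at x within S)"
  shows "mlin n (F' h)"
  unfolding mlin_def
proof (intro allI impI)
  fix vs :: "'b list" and i assume len: "length vs = n" and i: "i < n"
  have linx: "linear (\<lambda>v. F x' (vs[i := v]))" if "x' \<in> S" for x'
    using ml[OF that] len i unfolding mlin_def by blast
  show "linear (\<lambda>v. F' h (vs[i := v]))"
  proof (rule linearI)
    fix a b :: 'b
    have D1: "((\<lambda>x'. F x' (vs[i := a + b])) has_derivative (\<lambda>h. F' h (vs[i := a + b]))) (at x within S)"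
      using d[of "vs[i := a + b]"] len by simp
    have D2: "((\<lambda>x'. F x' (vs[i := a]) + F x' (vs[i := b])) has_derivative
               (\<lambda>h. F' h (vs[i := a]) + F' h (vs[i := b]))) (at x within S)"
      using d[of "vs[i := a]"] d[of "vs[i := b]"] len by (intro has_derivative_add) simp_all
    have D2': "((\<lambda>x'. F x' (vs[i := a + b])) has_derivative
               (\<lambda>h. F' h (vs[i := a]) + F' h (vs[i := b]))) (at x within S)"
      by (rule has_derivative_transform_within[OF D2 zero_less_one x])
         (simp add: linear_add[OF linx])
    have "(\<lambda>h. F' h (vs[i := a + b])) = (\<lambda>h. F' h (vs[i := a]) + F' h (vs[i := b]))"
      by (rule deriv_unique_convex[OF S x D1 D2'])
    then show "F' h (vs[i := a + b]) = F' h (vs[i := a]) + F' h (vs[i := b])"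
      by (rule fun_cong)
  next
    fix r :: real and b :: 'b
    have D1: "((\<lambda>x'. F x' (vs[i := r *\<^sub>R b])) has_derivative (\<lambda>h. F' h (vs[i := r *\<^sub>R b]))) (at x within S)"
      using d[of "vs[i := r *\<^sub>R b]"] len by simp
    have D2: "((\<lambda>x'. r * F x' (vs[i := b])) has_derivative (\<lambda>h. r * F' h (vs[i := b]))) (at x within S)"
      using d[of "vs[i := b]"] len by (intro has_derivative_mult_right) simp_all
    have D2': "((\<lambda>x'. F x' (vs[i := r *\<^sub>R b])) has_derivative (\<lambda>h. r * F' h (vs[i := b]))) (at x within S)"
      by (rule has_derivative_transform_within[OF D2 zero_less_one x])
         (simp add: linear_scale[OF linx])
    have "(\<lambda>h. F' h (vs[i := r *\<^sub>R b])) = (\<lambda>h. r * F' h (vs[i := b]))"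
      by (rule deriv_unique_convex[OF S x D1 D2'])
    then show "F' h (vs[i := r *\<^sub>R b]) = r *\<^sub>R F' h (vs[i := b])"
      by (simp add: fun_eq_iff)
  qed
qed

lemma mvt01:
  fixes q q' :: "real \<Rightarrow> real"
  assumes d: "\<And>s. s \<in> {0..1} \<Longrightarrow> (q has_real_derivative q' s) (at s within {0..1})"
    and ab: "0 \<le> a" "a < b" "b \<le> 1"
  shows "\<exists>z. a < z \<and> z < b \<and> q b - q a = (b - a) * q' z"
proof -
  have cont: "continuous_on {0..1} q"
    unfolding continuous_on_eq_continuous_within
    using d by (blast intro: DERIV_continuous)
  have c2: "continuous_on {a..b} q" using continuous_on_subset[OF cont] ab by auto
  have dz: "(q has_real_derivative q' z) (at z)" if "a < z" "z < b" for z
  proof -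
    have "at z within {0..1} = at z" using that ab by (intro at_within_Icc_at) auto
    then show ?thesis using d[of z] that ab by simp
  qed
  have "\<And>z. a < z \<Longrightarrow> z < b \<Longrightarrow> q differentiable at z"
    using dz real_differentiable_def by blast
  from MVT[OF ab(2) c2 this] obtain l z where z: "a < z" "z < b" "(q has_real_derivative l) (at z)" "q b - q a = (b - a) * l"
    by blast
  have "l = q' z" using DERIV_unique[OF z(3) dz[OF z(1,2)]] .
  then show ?thesis using z by blast
qed

lemma convex1d:
  fixes q q' :: "real \<Rightarrow> real"
  assumes d: "\<And>s. s \<in> {0..1} \<Longrightarrow> (q has_real_derivative q' s) (at s within {0..1})"
    and mono: "\<And>s1 s2. 0 \<le> s1 \<Longrightarrow> s1 \<le> s2 \<Longrightarrow> s2 \<le> 1 \<Longrightarrow> q' s1 \<le> q' s2"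
  shows "\<And>t. 0 \<le> t \<Longrightarrow> t \<le> 1 \<Longrightarrow> q t \<le> (1 - t) * q 0 + t * q 1"
    and "q 0 + q' 0 \<le> q 1"
proof -
  fix t :: real assume t: "0 \<le> t" "t \<le> 1"
  show "q t \<le> (1 - t) * q 0 + t * q 1"
  proof (cases "t = 0 \<or> t = 1")
    case True
    then show ?thesis by auto
  next
    case False
    then have t': "0 < t" "t < 1" using t by auto
    obtain z1 where z1: "0 < z1" "z1 < t" "q t - q 0 = (t - 0) * q' z1"
      using mvt01[OF d, of 0 t] t' by auto
    obtain z2 where z2: "t < z2" "z2 < 1" "q 1 - q t = (1 - t) * q' z2"
      using mvt01[OF d, of t 1] t' by auto
    have m: "q' z1 \<le> q' z2" using mono[of z1 z2] z1 z2 by auto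
    have "(1 - t) * (q t - q 0) = t * (1 - t) * q' z1" using z1 by simp
    also have "\<dots> \<le> t * (1 - t) * q' z2" using m t' by (intro mult_left_mono) auto
    also have "\<dots> = t * (q 1 - q t)" using z2 by simp
    finally have "(1 - t) * (q t - q 0) \<le> t * (q 1 - q t)" .
    then show ?thesis by (simp add: algebra_simps)
  qed
next
  obtain z where z: "0 < z" "z < 1" "q 1 - q 0 = (1 - 0) * q' z"
    using mvt01[OF d, of 0 1] by auto
  have "q' 0 \<le> q' z" using mono[of 0 z] z by auto
  then show "q 0 + q' 0 \<le> q 1" using z by simp
qed

definition wc :: "('a::real_inner \<Rightarrow> real) \<Rightarrow> 'a set \<Rightarrow> real \<Rightarrow> bool" where
  "wc \<psi> X c \<longleftrightarrow> (\<forall>u\<in>X. \<forall>v\<in>X. \<forall>t. 0 \<le> t \<longrightarrow> t \<le> 1 \<longrightarrow>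
      \<psi> (u + t *\<^sub>R (v - u)) \<le> (1 - t) * \<psi> u + t * \<psi> v + c / 2 * t * (1 - t) * (norm (v - u))\<^sup>2)"

lemma path_wc:
  fixes h :: "'a::euclidean_space \<Rightarrow> real" and H :: "'a \<Rightarrow> 'a \<Rightarrow> real"
  assumes X: "convex X" and uv: "u \<in> X" "v \<in> X"
    and d: "\<And>x. x \<in> X \<Longrightarrow> (h has_derivative H x) (at x within X)"
    and lip: "\<And>s1 s2. 0 \<le> s1 \<Longrightarrow> s1 \<le> s2 \<Longrightarrow> s2 \<le> 1 \<Longrightarrow>
        - K * (s2 - s1) \<le> H (u + s2 *\<^sub>R (v - u)) (v - u) - H (u + s1 *\<^sub>R (v - u)) (v - u)"
  shows "\<And>t. 0 \<le> t \<Longrightarrow> t \<le> 1 \<Longrightarrow> h (u + t *\<^sub>R (v - u)) \<le> (1 - t) * h u + t * h v + K / 2 * t * (1 - t)"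
    and "h u + H u (v - u) - K / 2 \<le> h v"
proof -
  let ?g = "\<lambda>s::real. u + s *\<^sub>R (v - u)"
  define q where "q s = h (?g s) + K / 2 * s\<^sup>2" for s
  define q' where "q' s = H (?g s) (v - u) + K * s" for s
  have img: "?g ` {0..1} \<subseteq> X" using seg_in[OF X uv] by auto
  have dq: "(q has_real_derivative q' s) (at s within {0..1})" if s: "s \<in> {0..1}" for s
  proof -
    have gs: "?g s \<in> X" using img s by blast
    have lin: "linear (H (?g s))" using d[OF gs] has_derivative_linear by blast
    have "((h \<circ> ?g) has_derivative (H (?g s) \<circ> (\<lambda>t. t *\<^sub>R (v - u)))) (at s within {0..1})"
      by (rule diff_chain_within[OF path_deriv]) (rule has_derivative_subset[OF d[OF gs] img])
    moreover have "(H (?g s) \<circ> (\<lambda>t. t *\<^sub>R (v - u))) = (*) (H (?g s) (v - u))"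
      by (auto simp: linear_scale[OF lin] fun_eq_iff)
    ultimately have "((h \<circ> ?g) has_real_derivative H (?g s) (v - u)) (at s within {0..1})"
      unfolding has_field_derivative_def by simp
    then have "((\<lambda>s. h (?g s)) has_real_derivative H (?g s) (v - u)) (at s within {0..1})"
      by (simp add: o_def)
    then have "((\<lambda>s. h (?g s) + K / 2 * s\<^sup>2) has_real_derivative (H (?g s) (v - u) + K / 2 * (2 * s))) (at s within {0..1})"
      by (auto intro!: derivative_eq_intros)
    then show ?thesis unfolding q_def q'_def by simp
  qed
  have mono: "q' s1 \<le> q' s2" if "0 \<le> s1" "s1 \<le> s2" "s2 \<le> 1" for s1 s2
    using lip[OF that] unfolding q'_def by (simp add: algebra_simps)
  fix t :: real assume t: "0 \<le> t" "t \<le> 1"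
  have "q t \<le> (1 - t) * q 0 + t * q 1"
    by (rule convex1d(1)[of q q']) (use dq mono t in auto)
  then have A: "h (u + t *\<^sub>R (v - u)) + K / 2 * t\<^sup>2 \<le> (1 - t) * h u + t * (h v + K / 2)"
    unfolding q_def by simp
  have eq: "(1 - t) * h u + t * (h v + K / 2) - K / 2 * t\<^sup>2 = (1 - t) * h u + t * h v + K / 2 * t * (1 - t)"
    by (simp add: field_simps power2_eq_square)
  show "h (u + t *\<^sub>R (v - u)) \<le> (1 - t) * h u + t * h v + K / 2 * t * (1 - t)"
    using A eq by linarith
next
  let ?g = "\<lambda>s::real. u + s *\<^sub>R (v - u)"
  define q where "q s = h (?g s) + K / 2 * s\<^sup>2" for s
  define q' where "q' s = H (?g s) (v - u) + K * s" for s
  have img: "?g ` {0..1} \<subseteq> X" using seg_in[OF X uv] by auto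
  have dq: "(q has_real_derivative q' s) (at s within {0..1})" if s: "s \<in> {0..1}" for s
  proof -
    have gs: "?g s \<in> X" using img s by blast
    have lin: "linear (H (?g s))" using d[OF gs] has_derivative_linear by blast
    have "((h \<circ> ?g) has_derivative (H (?g s) \<circ> (\<lambda>t. t *\<^sub>R (v - u)))) (at s within {0..1})"
      by (rule diff_chain_within[OF path_deriv]) (rule has_derivative_subset[OF d[OF gs] img])
    moreover have "(H (?g s) \<circ> (\<lambda>t. t *\<^sub>R (v - u))) = (*) (H (?g s) (v - u))"
      by (auto simp: linear_scale[OF lin] fun_eq_iff)
    ultimately have "((h \<circ> ?g) has_real_derivative H (?g s) (v - u)) (at s within {0..1})"
      unfolding has_field_derivative_def by simp
    then have "((\<lambda>s. h (?g s)) has_real_derivative H (?g s) (v - u)) (at s within {0..1})"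
      by (simp add: o_def)
    then have "((\<lambda>s. h (?g s) + K / 2 * s\<^sup>2) has_real_derivative (H (?g s) (v - u) + K / 2 * (2 * s))) (at s within {0..1})"
      by (auto intro!: derivative_eq_intros)
    then show ?thesis unfolding q_def q'_def by simp
  qed
  have mono: "q' s1 \<le> q' s2" if "0 \<le> s1" "s1 \<le> s2" "s2 \<le> 1" for s1 s2
    using lip[OF that] unfolding q'_def by (simp add: algebra_simps)
  have "q 0 + q' 0 \<le> q 1"
    by (rule convex1d(2)[of q q']) (use dq mono in auto)
  then show "h u + H u (v - u) - K / 2 \<le> h v"
    unfolding q_def q'_def by simp
qed

definition Fm :: "('a::real_normed_vector \<Rightarrow> real) \<Rightarrow> real \<Rightarrow> 'a \<Rightarrow> 'a \<Rightarrow> real" where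
  "Fm \<psi> lb x u = \<psi> u + lb / 2 * (norm (u - x))\<^sup>2"

lemma moreau_Fm: "moreau \<psi> X lb x = Inf (Fm \<psi> lb x ` X)"
  by (simp add: moreau_def Fm_def)

lemma norm_comb:
  fixes a b :: "'a::real_inner"
  shows "(norm (a + t *\<^sub>R (b - a)))\<^sup>2 = (1 - t) * (norm a)\<^sup>2 + t * (norm b)\<^sup>2 - t * (1 - t) * (norm (b - a))\<^sup>2"
  unfolding power2_norm_eq_inner
  by (simp add: inner_add_left inner_add_right inner_diff_left inner_diff_right
      inner_commute algebra_simps)

lemma norm_shift:
  fixes u x h :: "'a::real_inner"
  shows "(norm (u - (x + h)))\<^sup>2 = (norm (u - x))\<^sup>2 - 2 * ((u - x) \<bullet> h) + (norm h)\<^sup>2"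
  unfolding power2_norm_eq_inner
  by (simp add: inner_add_left inner_add_right inner_diff_left inner_diff_right
      inner_commute algebra_simps)

definition lbq :: "('a::real_normed_vector \<Rightarrow> real) \<Rightarrow> 'a set \<Rightarrow> real \<Rightarrow> bool" where
  "lbq \<psi> X L \<longleftrightarrow> (\<exists>A B. \<forall>u\<in>X. A - B * norm u - L / 2 * (norm u)\<^sup>2 \<le> \<psi> u)"

lemma quad_lb:
  fixes r n A c L :: real
  assumes "L > 0" "r \<ge> 0" "n \<ge> 0" "d \<ge> \<bar>r - n\<bar>"
  shows "A + L * n\<^sup>2 - (c + 2 * L * n)\<^sup>2 / (2 * L) \<le> A - c * r - L / 2 * r\<^sup>2 + L * d\<^sup>2"
proof -
  have d2: "(r - n)\<^sup>2 \<le> d\<^sup>2" using assms(4) by (metis abs_ge_zero power2_abs power_mono)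
  have sq: "0 \<le> L / 2 * (r - (c + 2 * L * n) / L)\<^sup>2" using assms(1) by simp
  have e: "L / 2 * (r - (c + 2 * L * n) / L)\<^sup>2 = L / 2 * r\<^sup>2 - (c + 2 * L * n) * r + (c + 2 * L * n)\<^sup>2 / (2 * L)"
    using assms(1) by (simp add: power2_eq_square field_simps)
  have "L * (r - n)\<^sup>2 \<le> L * d\<^sup>2" using d2 assms(1) by simp
  moreover have "L * (r - n)\<^sup>2 = L * r\<^sup>2 - 2 * L * n * r + L * n\<^sup>2" by (simp add: power2_eq_square algebra_simps)
  ultimately show ?thesis using sq e by (simp add: algebra_simps)
qed

lemma wc_arith:
  fixes P pu pv L t c Q a b :: real
  assumes "P \<le> (1-t)*pu + t*pv + L/2*t*(1-t)*c" "Q = (1-t)*a + t*b - t*(1-t)*c"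
  shows "P + L*Q \<le> (1-t)*(pu + L*a) + t*(pv + L*b) - L/2*t*(1-t)*c"
proof -
  have e1: "P + L*Q = P + ((1-t)*(L*a) + t*(L*b) - L*t*(1-t)*c)" unfolding assms(2) by (simp add: algebra_simps)
  have e2: "(1-t)*(pu + L*a) + t*(pv + L*b) - L/2*t*(1-t)*c = ((1-t)*pu + t*pv + L/2*t*(1-t)*c) + ((1-t)*(L*a) + t*(L*b) - L*t*(1-t)*c)"
    by (simp add: algebra_simps)
  show ?thesis unfolding e1 e2 using assms(1) by linarith
qed

lemma lo_arith:
  fixes M L q Fu r a n2 b :: real
  assumes "M + L / 2 * q \<le> Fu" "0 \<le> L / 2 * r" "r = q - 4 * a + 4 * n2"
  shows "M - 2 * L * b - L * n2 \<le> Fu - 2 * L * (a + b) + L * n2"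
proof -
  have e1: "L / 2 * r = L / 2 * q - 2 * (L * a) + 2 * (L * n2)" unfolding assms(3) by (simp add: algebra_simps)
  have e2: "2 * L * (a + b) = 2 * (L * a) + 2 * L * b" by (simp add: algebra_simps)
  show ?thesis unfolding e2 using assms(1,2) e1 by linarith
qed

locale moreau_ctx =
  fixes \<psi> :: "'a::euclidean_space \<Rightarrow> real" and X :: "'a set" and L :: real
  assumes X: "convex X" "X \<noteq> {}" and L: "L > 0"
    and wcL: "wc \<psi> X L" and lb: "lbq \<psi> X L"
begin

abbreviation "F x \<equiv> Fm \<psi> (2 * L) x"
abbreviation "M x \<equiv> moreau \<psi> X (2 * L) x"

lemma F_eq: "F x u = \<psi> u + L * (norm (u - x))\<^sup>2"
  by (simp add: Fm_def)

lemma bddF: "bdd_below (F x ` X)"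
proof -
  obtain A B where AB: "\<And>u. u \<in> X \<Longrightarrow> A - B * norm u - L / 2 * (norm u)\<^sup>2 \<le> \<psi> u"
    using lb unfolding lbq_def by blast
  show ?thesis
  proof (rule bdd_belowI2[where m = "A + L * (norm x)\<^sup>2 - (B + 2 * L * norm x)\<^sup>2 / (2 * L)"])
    fix u assume u: "u \<in> X"
    have "\<bar>norm u - norm x\<bar> \<le> norm (u - x)" by (rule norm_triangle_ineq3)
    then have "A + L * (norm x)\<^sup>2 - (B + 2 * L * norm x)\<^sup>2 / (2 * L) \<le> A - B * norm u - L / 2 * (norm u)\<^sup>2 + L * (norm (u - x))\<^sup>2"
      using L by (intro quad_lb) auto
    also have "\<dots> \<le> F x u" using AB[OF u] F_eq by simp
    finally show "A + L * (norm x)\<^sup>2 - (B + 2 * L * norm x)\<^sup>2 / (2 * L) \<le> F x u" .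
  qed
qed

lemma M_le: "u \<in> X \<Longrightarrow> M x \<le> F x u"
  unfolding moreau_Fm by (rule cINF_lower[OF bddF])

lemma M_ge: "(\<And>u. u \<in> X \<Longrightarrow> c \<le> F x u) \<Longrightarrow> c \<le> M x"
  unfolding moreau_Fm using X(2) by (intro cINF_greatest) auto

lemma M_approx: "\<delta> > 0 \<Longrightarrow> \<exists>u\<in>X. F x u < M x + \<delta>"
proof -
  assume d: "\<delta> > 0"
  have "Inf (F x ` X) < M x + \<delta>" using d unfolding moreau_Fm by simp
  then show ?thesis unfolding moreau_Fm using X(2) bddF by (subst (asm) cInf_less_iff) auto
qed

lemma F_wc:
  assumes "u \<in> X" "v \<in> X" "0 \<le> t" "t \<le> 1"
  shows "F x (u + t *\<^sub>R (v - u)) \<le> (1 - t) * F x u + t * F x v - L / 2 * t * (1 - t) * (norm (v - u))\<^sup>2"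
proof -
  have p: "\<psi> (u + t *\<^sub>R (v - u)) \<le> (1 - t) * \<psi> u + t * \<psi> v + L / 2 * t * (1 - t) * (norm (v - u))\<^sup>2"
    using wcL assms unfolding wc_def by blast
  have q: "(norm (u + t *\<^sub>R (v - u) - x))\<^sup>2 = (1 - t) * (norm (u - x))\<^sup>2 + t * (norm (v - x))\<^sup>2 - t * (1 - t) * (norm (v - u))\<^sup>2"
    using norm_comb[of "u - x" t "v - x"] by (simp add: algebra_simps)
  show ?thesis unfolding F_eq by (rule wc_arith[OF p q])
qed


lemma QG:
  assumes "u \<in> X" "v \<in> X" "0 \<le> t" "t \<le> 1"
  shows "L / 2 * t * (1 - t) * (norm (v - u))\<^sup>2 \<le> (1 - t) * (F x u - M x) + t * (F x v - M x)"
proof -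
  have w: "u + t *\<^sub>R (v - u) \<in> X" using seg_in[OF X(1) assms] .
  have "M x \<le> F x (u + t *\<^sub>R (v - u))" using M_le[OF w] .
  also have "\<dots> \<le> (1 - t) * F x u + t * F x v - L / 2 * t * (1 - t) * (norm (v - u))\<^sup>2"
    using F_wc[OF assms] .
  finally have a: "M x \<le> (1 - t) * F x u + t * F x v - L / 2 * t * (1 - t) * (norm (v - u))\<^sup>2" .
  have "(1 - t) * (F x u - M x) + t * (F x v - M x) = (1 - t) * F x u + t * F x v - M x"
    by (simp add: algebra_simps)
  then show ?thesis using a by linarith
qed

lemma seq_exists: "\<exists>s. \<forall>n. s n \<in> X \<and> F x (s n) < M x + inverse (real (Suc n))"
proof -
  have "\<forall>n. \<exists>u. u \<in> X \<and> F x u < M x + inverse (real (Suc n))"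
  proof
    fix n
    have "inverse (real (Suc n)) > 0" by simp
    from M_approx[OF this, of x] show "\<exists>u. u \<in> X \<and> F x u < M x + inverse (real (Suc n))" by blast
  qed
  then show ?thesis by (rule choice)
qed

lemma half_sum: "(A::real) < i \<Longrightarrow> B < j \<Longrightarrow> (1 - 1/2) * A + 1/2 * B < 1/2 * i + 1/2 * j"
  by (simp add: divide_simps)

lemma quarter_helper: "(L::real) > 0 \<Longrightarrow> L / 2 * (1/2) * (1 - 1/2) * z < 1/2 * i + 1/2 * j \<Longrightarrow> z < 4 / L * (i + j)"
  by (simp add: field_simps)

lemma sq_less_imp: "(a::real)\<^sup>2 < b\<^sup>2 \<Longrightarrow> 0 \<le> b \<Longrightarrow> a < b"
  using abs_less_iff power2_less_imp_less by fastforce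

lemma prox_exists:
  "\<exists>p s. (\<forall>n. s n \<in> X) \<and> s \<longlonglongrightarrow> p \<and> (\<lambda>n. F x (s n)) \<longlonglongrightarrow> M x
        \<and> (\<forall>u\<in>X. L / 2 * (norm (u - p))\<^sup>2 \<le> F x u - M x)"
proof -
  obtain s where s: "\<And>n. s n \<in> X" "\<And>n. F x (s n) < M x + inverse (real (Suc n))"
    using seq_exists by blast
  have sge: "M x \<le> F x (s n)" for n using M_le[OF s(1)] .
  have cs: "(norm (s m - s n))\<^sup>2 < 4 / L * (inverse (real (Suc n)) + inverse (real (Suc m)))" for m n
  proof -
    have "L / 2 * (1/2) * (1 - 1/2) * (norm (s m - s n))\<^sup>2 \<le> (1 - 1/2) * (F x (s n) - M x) + (1/2) * (F x (s m) - M x)"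
      using QG[where u="s n" and v="s m" and t="1/2" and x=x] s(1) by simp
    also have "\<dots> < (1/2) * inverse (real (Suc n)) + (1/2) * inverse (real (Suc m))"
      by (rule half_sum) (use s(2)[of n] s(2)[of m] in linarith)+
    finally show ?thesis using L by (rule quarter_helper[rotated])
  qed
  have "Cauchy s"
  proof (rule metric_CauchyI)
    fix e :: real assume e: "e > 0"
    obtain N :: nat where N: "8 / (L * e\<^sup>2) < real N" using reals_Archimedean2 by blast
    have Npos: "0 < real (Suc N)" by simp
    have Nb: "8 / (L * e\<^sup>2) < real (Suc N)" using N by simp
    then have NB: "8 / real (Suc N) < L * e\<^sup>2" using L e Npos
      by (simp add: field_simps)
    show "\<exists>N. \<forall>m\<ge>N. \<forall>n\<ge>N. dist (s m) (s n) < e"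
    proof (intro exI[of _ N] allI impI)
      fix m n assume mn: "N \<le> m" "N \<le> n"
      have im: "inverse (real (Suc m)) \<le> inverse (real (Suc N))" using mn by (simp add: le_imp_inverse_le)
      have inn: "inverse (real (Suc n)) \<le> inverse (real (Suc N))" using mn by (simp add: le_imp_inverse_le)
      have sm: "inverse (real (Suc n)) + inverse (real (Suc m)) \<le> 2 * inverse (real (Suc N))"
        using im inn by linarith
      have "(norm (s m - s n))\<^sup>2 < 4 / L * (inverse (real (Suc n)) + inverse (real (Suc m)))" by (rule cs)
      also have "\<dots> \<le> 4 / L * (2 * inverse (real (Suc N)))" using sm L by (intro mult_left_mono) auto
      also have "\<dots> = (8 / real (Suc N)) / L" by (simp add: field_simps)
      also have "\<dots> < e\<^sup>2"
      proof -
        have "8 / real (Suc N) < e\<^sup>2 * L" using NB by (metis mult.commute)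
        then show ?thesis using pos_divide_less_eq[OF L, of "8 / real (Suc N)" "e\<^sup>2"] by blast
      qed
      finally show "dist (s m) (s n) < e" unfolding dist_norm by (rule sq_less_imp) (use e in auto)
    qed
  qed
  then obtain p where sp: "s \<longlonglongrightarrow> p" using Cauchy_convergent_iff convergent_def by blast
  have inv0: "(\<lambda>n. inverse (real (Suc n))) \<longlonglongrightarrow> 0" by (rule LIMSEQ_inverse_real_of_nat)
  have Fs: "(\<lambda>n. F x (s n)) \<longlonglongrightarrow> M x"
  proof (rule real_tendsto_sandwich[of "\<lambda>n. M x" _ _ "\<lambda>n. M x + inverse (real (Suc n))"])
    show "\<forall>\<^sub>F n in sequentially. M x \<le> F x (s n)" using sge by simp
    show "\<forall>\<^sub>F n in sequentially. F x (s n) \<le> M x + inverse (real (Suc n))" by (rule always_eventually) (use s(2) less_imp_le in blast)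
    show "(\<lambda>n. M x) \<longlonglongrightarrow> M x" by simp
    show "(\<lambda>n. M x + inverse (real (Suc n))) \<longlonglongrightarrow> M x" using tendsto_add[OF tendsto_const inv0] by simp
  qed
  have PQ: "L / 2 * (norm (u - p))\<^sup>2 \<le> F x u - M x" if u: "u \<in> X" for u
  proof -
    have t_ineq: "t * (L / 2 * (norm (u - p))\<^sup>2) \<le> F x u - M x" if t: "0 < t" "t < 1" for t
    proof -
      have "L / 2 * t * (1 - t) * (norm (p - u))\<^sup>2 \<le> (1 - t) * (F x u - M x) + t * 0"
      proof (rule LIMSEQ_le)
        show "(\<lambda>n. L / 2 * t * (1 - t) * (norm (s n - u))\<^sup>2) \<longlonglongrightarrow> L / 2 * t * (1 - t) * (norm (p - u))\<^sup>2"
          by (intro tendsto_intros sp)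
        show "(\<lambda>n. (1 - t) * (F x u - M x) + t * (F x (s n) - M x)) \<longlonglongrightarrow> (1 - t) * (F x u - M x) + t * 0"
          by (intro tendsto_intros) (use Fs LIM_zero in blast)
        show "\<exists>N. \<forall>n\<ge>N. L / 2 * t * (1 - t) * (norm (s n - u))\<^sup>2 \<le> (1 - t) * (F x u - M x) + t * (F x (s n) - M x)"
          using QG[OF u s(1)] t by auto
      qed
      then have "(1 - t) * (t * (L / 2 * (norm (u - p))\<^sup>2)) \<le> (1 - t) * (F x u - M x)"
        by (simp add: norm_minus_commute algebra_simps)
      then show ?thesis using t by simp
    qed
    define a where "a = L / 2 * (norm (u - p))\<^sup>2"
    define b where "b = F x u - M x"
    have b0: "0 \<le> b" using M_le[OF u] unfolding b_def by simp
    show ?thesis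
    proof (rule ccontr)
      assume "\<not> ?thesis"
      then have ab: "b < a" unfolding a_def b_def by simp
      then have a0: "0 < a" using b0 by simp
      define t where "t = (a + b) / (2 * a)"
      have t0: "0 < t" unfolding t_def using a0 b0 by simp
      have t1: "t < 1" unfolding t_def using a0 ab by (simp add: field_simps)
      have "t * a = (a + b) / 2" unfolding t_def using a0 by (simp add: field_simps)
      then have "b < t * a" using ab by simp
      then show False using t_ineq[OF t0 t1] unfolding a_def b_def by simp
    qed
  qed
  show ?thesis using s(1) sp Fs PQ by blast
qed

lemma M_deriv:
  assumes sX: "\<And>n. s n \<in> X" and sp: "s \<longlonglongrightarrow> p" and Fs: "(\<lambda>n. F x (s n)) \<longlonglongrightarrow> M x"
    and PQ: "\<And>u. u \<in> X \<Longrightarrow> L / 2 * (norm (u - p))\<^sup>2 \<le> F x u - M x"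
  shows "((\<lambda>y. M y) has_derivative (\<lambda>h. ((2 * L) *\<^sub>R (x - p)) \<bullet> h)) (at x)"
proof -
  have Fsh: "F (x + h) u = F x u - 2 * L * ((u - x) \<bullet> h) + L * (norm h)\<^sup>2" for u h
    unfolding F_eq norm_shift by (simp add: algebra_simps)
  have up: "M (x + h) \<le> M x - 2 * L * ((p - x) \<bullet> h) + L * (norm h)\<^sup>2" for h
  proof (rule LIMSEQ_le_const)
    show "(\<lambda>n. F x (s n) - 2 * L * ((s n - x) \<bullet> h) + L * (norm h)\<^sup>2) \<longlonglongrightarrow> M x - 2 * L * ((p - x) \<bullet> h) + L * (norm h)\<^sup>2"
      by (intro tendsto_intros Fs sp)
    show "\<exists>N. \<forall>n\<ge>N. M (x + h) \<le> F x (s n) - 2 * L * ((s n - x) \<bullet> h) + L * (norm h)\<^sup>2"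
      using M_le[OF sX, of "x + h"] Fsh by auto
  qed
  have lo: "M x - 2 * L * ((p - x) \<bullet> h) - L * (norm h)\<^sup>2 \<le> M (x + h)" for h
  proof (rule M_ge)
    fix u assume u: "u \<in> X"
    have sq: "(norm ((u - p) - 2 *\<^sub>R h))\<^sup>2 = (norm (u - p))\<^sup>2 - 4 * ((u - p) \<bullet> h) + 4 * (norm h)\<^sup>2"
      unfolding power2_norm_eq_inner
      by (simp add: inner_add_left inner_add_right inner_diff_left inner_diff_right inner_commute algebra_simps)
    have nn: "0 \<le> L / 2 * (norm ((u - p) - 2 *\<^sub>R h))\<^sup>2" using L by simp
    have ip: "(u - x) \<bullet> h = (u - p) \<bullet> h + (p - x) \<bullet> h" by (simp add: inner_diff_left)
    have "M x + L / 2 * (norm (u - p))\<^sup>2 \<le> F x u" using PQ[OF u] by simp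
    then show "M x - 2 * L * ((p - x) \<bullet> h) - L * (norm h)\<^sup>2 \<le> F (x + h) u"
      unfolding Fsh ip using nn sq by (rule lo_arith) 
  qed
  have bnd: "norm (M y - M x - ((2 * L) *\<^sub>R (x - p)) \<bullet> (y - x)) \<le> L * (norm (y - x))\<^sup>2" for y
  proof -
    have e: "((2 * L) *\<^sub>R (x - p)) \<bullet> (y - x) = - 2 * L * ((p - x) \<bullet> (y - x))"
      by (simp add: inner_diff_left algebra_simps)
    have "y = x + (y - x)" by simp
    then have u1: "M y \<le> M x - 2 * L * ((p - x) \<bullet> (y - x)) + L * (norm (y - x))\<^sup>2"
      and l1: "M x - 2 * L * ((p - x) \<bullet> (y - x)) - L * (norm (y - x))\<^sup>2 \<le> M y"
      using up[of "y - x"] lo[of "y - x"] by simp_all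
    show ?thesis unfolding e real_norm_def using u1 l1 by (simp add: abs_le_iff)
  qed
  show ?thesis
    unfolding has_derivative_at_alt
  proof (intro conjI allI impI)
    show "bounded_linear (\<lambda>h. ((2 * L) *\<^sub>R (x - p)) \<bullet> h)" by (rule bounded_linear_inner_right)
  next
    fix e :: real assume e: "e > 0"
    show "\<exists>d>0. \<forall>y. norm (y - x) < d \<longrightarrow> norm (M y - M x - ((2 * L) *\<^sub>R (x - p)) \<bullet> (y - x)) \<le> e * norm (y - x)"
    proof (intro exI[of _ "e / L"] conjI allI impI)
      show "0 < e / L" using e L by simp
      fix y assume y: "norm (y - x) < e / L"
      have "L * norm (y - x) \<le> e" using y L by (simp add: field_simps)
      then have "L * (norm (y - x))\<^sup>2 \<le> e * norm (y - x)"
        by (simp add: power2_eq_square mult.assoc[symmetric] mult_right_mono)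
      then show "norm (M y - M x - ((2 * L) *\<^sub>R (x - p)) \<bullet> (y - x)) \<le> e * norm (y - x)"
        using bnd[of y] by linarith
    qed
  qed
qed

end

lemma grad_eq:
  fixes F :: "'a::euclidean_space \<Rightarrow> real"
  assumes d: "(F has_derivative (\<lambda>h. g \<bullet> h)) (at x)"
  shows "grad F x = g"
proof -
  have ex: "\<exists>g. (F has_derivative (\<lambda>h. g \<bullet> h)) (at x)" using d by blast
  define g' where "g' = grad F x"
  have d': "(F has_derivative (\<lambda>h. g' \<bullet> h)) (at x)"
    unfolding g'_def grad_def by (rule someI_ex[OF ex])
  have "(\<lambda>h. g' \<bullet> h) = (\<lambda>h. g \<bullet> h)" by (rule has_derivative_unique[OF d' d])
  then have "g' \<bullet> (g' - g) = g \<bullet> (g' - g)" by (rule fun_cong)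
  then have "(g' - g) \<bullet> (g' - g) = 0" by (simp add: inner_diff_left)
  then have "g' = g" by simp
  then show ?thesis unfolding g'_def .
qed

lemma grad_moreau_zero:
  fixes \<psi> :: "'a::euclidean_space \<Rightarrow> real"
  shows "grad (moreau \<psi> X 0) x = 0"
proof -
  have "moreau \<psi> X 0 = (\<lambda>y. Inf (\<psi> ` X))" by (simp add: moreau_def fun_eq_iff)
  then have "(moreau \<psi> X 0 has_derivative (\<lambda>h. 0 \<bullet> h)) (at x)" by simp
  then show ?thesis by (rule grad_eq)
qed

context moreau_ctx
begin

lemma prox_grad:
  "\<exists>p s. (\<forall>n. s n \<in> X) \<and> s \<longlonglongrightarrow> p \<and> (\<lambda>n. F x (s n)) \<longlonglongrightarrow> M x
        \<and> (\<forall>u\<in>X. L / 2 * (norm (u - p))\<^sup>2 \<le> F x u - M x)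
        \<and> grad (moreau \<psi> X (2 * L)) x = (2 * L) *\<^sub>R (x - p)"
proof -
  obtain p s where ps: "\<forall>n. s n \<in> X" "s \<longlonglongrightarrow> p" "(\<lambda>n. F x (s n)) \<longlonglongrightarrow> M x"
      "\<forall>u\<in>X. L / 2 * (norm (u - p))\<^sup>2 \<le> F x u - M x"
    using prox_exists by blast
  have "((\<lambda>y. M y) has_derivative (\<lambda>h. ((2 * L) *\<^sub>R (x - p)) \<bullet> h)) (at x)"
    by (rule M_deriv) (use ps in auto)
  then have "grad (\<lambda>y. M y) x = (2 * L) *\<^sub>R (x - p)" by (rule grad_eq)
  then show ?thesis using ps by auto
qed

end

lemma cmp_arith:
  fixes L A B a1 a2 K c e1 e2 d1 d2 :: real
  assumes "L / 2 * A \<le> a1" "L / 2 * B \<le> a2"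
    "a1 + a2 = (d1 - d2) + e1 + e2" "\<bar>d1 - d2\<bar> \<le> K * c"
  shows "L / 2 * A + L / 2 * B \<le> K * c + e1 + e2"
  using assms by linarith

lemma compare:
  fixes \<psi>1 \<psi>2 :: "'a::euclidean_space \<Rightarrow> real"
  assumes c1: "moreau_ctx \<psi>1 X L" and c2: "moreau_ctx \<psi>2 X L" and K: "K \<ge> 0"
    and lip: "\<And>u v. u \<in> X \<Longrightarrow> v \<in> X \<Longrightarrow> \<bar>(\<psi>1 u - \<psi>2 u) - (\<psi>1 v - \<psi>2 v)\<bar> \<le> K * norm (u - v)"
  shows "norm (grad (moreau \<psi>1 X (2 * L)) x - grad (moreau \<psi>2 X (2 * L)) x) \<le> 2 * K"
proof -
  interpret A: moreau_ctx \<psi>1 X L by (rule c1)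
  interpret B: moreau_ctx \<psi>2 X L by (rule c2)
  have L: "L > 0" by (rule A.L)
  obtain p1 s1 where P1: "\<forall>n. s1 n \<in> X" "s1 \<longlonglongrightarrow> p1" "(\<lambda>n. Fm \<psi>1 (2 * L) x (s1 n)) \<longlonglongrightarrow> moreau \<psi>1 X (2 * L) x"
      "\<forall>u\<in>X. L / 2 * (norm (u - p1))\<^sup>2 \<le> Fm \<psi>1 (2 * L) x u - moreau \<psi>1 X (2 * L) x"
      "grad (moreau \<psi>1 X (2 * L)) x = (2 * L) *\<^sub>R (x - p1)"
    using A.prox_grad by blast
  obtain p2 s2 where P2: "\<forall>n. s2 n \<in> X" "s2 \<longlonglongrightarrow> p2" "(\<lambda>n. Fm \<psi>2 (2 * L) x (s2 n)) \<longlonglongrightarrow> moreau \<psi>2 X (2 * L) x"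
      "\<forall>u\<in>X. L / 2 * (norm (u - p2))\<^sup>2 \<le> Fm \<psi>2 (2 * L) x u - moreau \<psi>2 X (2 * L) x"
      "grad (moreau \<psi>2 X (2 * L)) x = (2 * L) *\<^sub>R (x - p2)"
    using B.prox_grad by blast
  let ?M1 = "moreau \<psi>1 X (2 * L) x" and ?M2 = "moreau \<psi>2 X (2 * L) x"
  have Fd: "Fm \<psi>1 (2 * L) x u - Fm \<psi>2 (2 * L) x u = \<psi>1 u - \<psi>2 u" for u by (simp add: Fm_def)
  have ineq: "L / 2 * (norm (s2 n - p1))\<^sup>2 + L / 2 * (norm (s1 n - p2))\<^sup>2
      \<le> K * norm (s2 n - s1 n) + (Fm \<psi>1 (2 * L) x (s1 n) - ?M1) + (Fm \<psi>2 (2 * L) x (s2 n) - ?M2)" for n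
  proof (rule cmp_arith)
    show "L / 2 * (norm (s2 n - p1))\<^sup>2 \<le> Fm \<psi>1 (2 * L) x (s2 n) - ?M1" using P1(4) P2(1) by blast
    show "L / 2 * (norm (s1 n - p2))\<^sup>2 \<le> Fm \<psi>2 (2 * L) x (s1 n) - ?M2" using P2(4) P1(1) by blast
    show "\<bar>(\<psi>1 (s2 n) - \<psi>2 (s2 n)) - (\<psi>1 (s1 n) - \<psi>2 (s1 n))\<bar> \<le> K * norm (s2 n - s1 n)"
      using lip P1(1) P2(1) by blast
    show "(Fm \<psi>1 (2 * L) x (s2 n) - ?M1) + (Fm \<psi>2 (2 * L) x (s1 n) - ?M2) =
        ((\<psi>1 (s2 n) - \<psi>2 (s2 n)) - (\<psi>1 (s1 n) - \<psi>2 (s1 n))) + (Fm \<psi>1 (2 * L) x (s1 n) - ?M1) + (Fm \<psi>2 (2 * L) x (s2 n) - ?M2)"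
      using Fd[of "s2 n"] Fd[of "s1 n"] by linarith
  qed
  have lim: "L / 2 * (norm (p2 - p1))\<^sup>2 + L / 2 * (norm (p1 - p2))\<^sup>2 \<le> K * norm (p2 - p1) + 0 + 0"
  proof (rule LIMSEQ_le)
    show "(\<lambda>n. L / 2 * (norm (s2 n - p1))\<^sup>2 + L / 2 * (norm (s1 n - p2))\<^sup>2) \<longlonglongrightarrow> L / 2 * (norm (p2 - p1))\<^sup>2 + L / 2 * (norm (p1 - p2))\<^sup>2"
      by (intro tendsto_intros P1(2) P2(2))
    have z1: "(\<lambda>n. Fm \<psi>1 (2 * L) x (s1 n) - ?M1) \<longlonglongrightarrow> 0" using P1(3) LIM_zero by blast
    have z2: "(\<lambda>n. Fm \<psi>2 (2 * L) x (s2 n) - ?M2) \<longlonglongrightarrow> 0" using P2(3) LIM_zero by blast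
    show "(\<lambda>n. K * norm (s2 n - s1 n) + (Fm \<psi>1 (2 * L) x (s1 n) - ?M1) + (Fm \<psi>2 (2 * L) x (s2 n) - ?M2)) \<longlonglongrightarrow> K * norm (p2 - p1) + 0 + 0"
      by (intro tendsto_intros P1(2) P2(2) z1 z2)
    show "\<exists>N. \<forall>n\<ge>N. L / 2 * (norm (s2 n - p1))\<^sup>2 + L / 2 * (norm (s1 n - p2))\<^sup>2
      \<le> K * norm (s2 n - s1 n) + (Fm \<psi>1 (2 * L) x (s1 n) - ?M1) + (Fm \<psi>2 (2 * L) x (s2 n) - ?M2)"
      using ineq by blast
  qed
  define r where "r = norm (p1 - p2)"
  have r0: "r \<ge> 0" unfolding r_def by simp
  have "L * r * r \<le> K * r" using lim unfolding r_def by (simp add: norm_minus_commute power2_eq_square algebra_simps)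
  then have Lr: "L * r \<le> K"
  proof (cases "r = 0")
    case True then show ?thesis using K by simp
  next
    case False
    then have "r > 0" using r0 by simp
    then show ?thesis using \<open>L * r * r \<le> K * r\<close> by simp
  qed
  have "grad (moreau \<psi>1 X (2 * L)) x - grad (moreau \<psi>2 X (2 * L)) x = (2 * L) *\<^sub>R (p2 - p1)"
    using P1(5) P2(5) by (simp add: algebra_simps)
  then have "norm (grad (moreau \<psi>1 X (2 * L)) x - grad (moreau \<psi>2 X (2 * L)) x) = 2 * L * r"
    using L unfolding r_def by (simp add: norm_minus_commute)
  then show ?thesis using Lr by simp
qed

lemma mvtI:
  fixes q q' :: "real \<Rightarrow> real"
  assumes d: "\<And>s. s \<in> {lo..hi} \<Longrightarrow> (q has_real_derivative q' s) (at s within {lo..hi})"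
    and ab: "lo \<le> a" "a < b" "b \<le> hi"
  shows "\<exists>z. a < z \<and> z < b \<and> q b - q a = (b - a) * q' z"
proof -
  have cont: "continuous_on {lo..hi} q"
    unfolding continuous_on_eq_continuous_within
    using d by (blast intro: DERIV_continuous)
  have c2: "continuous_on {a..b} q" using continuous_on_subset[OF cont] ab by auto
  have dz: "(q has_real_derivative q' z) (at z)" if "a < z" "z < b" for z
  proof -
    have "at z within {lo..hi} = at z" using that ab by (intro at_within_Icc_at) auto
    then show ?thesis using d[of z] that ab by simp
  qed
  have "\<And>z. a < z \<Longrightarrow> z < b \<Longrightarrow> q differentiable at z"
    using dz real_differentiable_def by blast
  from MVT[OF ab(2) c2 this] obtain l z where z: "a < z" "z < b" "(q has_real_derivative l) (at z)" "q b - q a = (b - a) * l"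
    by blast
  have "l = q' z" using DERIV_unique[OF z(3) dz[OF z(1,2)]] .
  then show ?thesis using z by blast
qed

lemma nonpos_deriv_le:
  fixes q q' :: "real \<Rightarrow> real"
  assumes d: "\<And>s. s \<in> {0..R} \<Longrightarrow> (q has_real_derivative q' s) (at s within {0..R})"
    and np: "\<And>s. s \<in> {0..R} \<Longrightarrow> q' s \<le> 0" and r: "r \<in> {0..R}"
  shows "q r \<le> q 0"
proof (cases "r = 0")
  case True then show ?thesis by simp
next
  case False
  then have r': "0 < r" "r \<le> R" using r by auto
  obtain z where z: "0 < z" "z < r" "q r - q 0 = (r - 0) * q' z"
    using mvtI[OF d, of 0 r] r' by auto
  have "q' z \<le> 0" using np[of z] z r' by auto
  then have "(r - 0) * q' z \<le> 0" using r' by (simp add: mult_nonneg_nonpos)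
  then show ?thesis using z by simp
qed

lemma poly_deriv:
  fixes c :: "nat \<Rightarrow> real"
  shows "((\<lambda>s. \<Sum>j\<le>Suc n. c j * s ^ j / fact j) has_real_derivative (\<Sum>j\<le>n. c (Suc j) * s ^ j / fact j)) (at s within S)"
proof -
  have "((\<lambda>s. \<Sum>j\<le>Suc n. c j * s ^ j / fact j) has_real_derivative
         (\<Sum>j\<le>Suc n. c j * (of_nat j * s ^ (j - 1)) / fact j)) (at s within S)"
    by (intro DERIV_sum) (auto intro!: derivative_eq_intros)
  also have "(\<Sum>j\<le>Suc n. c j * (of_nat j * s ^ (j - 1)) / fact j) = (\<Sum>j\<le>n. c (Suc j) * s ^ j / fact j)"
  proof -
    have "(\<Sum>j\<le>Suc n. c j * (of_nat j * s ^ (j - 1)) / fact j)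
        = c 0 * (of_nat 0 * s ^ (0 - 1)) / fact 0 + (\<Sum>j\<le>n. c (Suc j) * (of_nat (Suc j) * s ^ (Suc j - 1)) / fact (Suc j))"
      by (rule sum.atMost_Suc_shift)
    also have "\<dots> = (\<Sum>j\<le>n. c (Suc j) * (of_nat (Suc j) * s ^ (Suc j - 1)) / fact (Suc j))"
      by simp
    also have "\<dots> = (\<Sum>j\<le>n. c (Suc j) * s ^ j / fact j)"
      by (intro sum.cong refl) (simp add: fact_Suc field_simps del: of_nat_Suc)
    finally show ?thesis by simp
  qed
  finally show ?thesis .
qed

lemma taylor1d:
  fixes h :: "nat \<Rightarrow> real \<Rightarrow> real"
  shows "(\<forall>j<n. \<forall>s\<in>{0..R}. (h j has_real_derivative h (Suc j) s) (at s within {0..R})) \<Longrightarrow>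
         (\<forall>s\<in>{0..R}. \<bar>h n s - h n 0\<bar> \<le> B) \<Longrightarrow>
         \<forall>r\<in>{0..R}. \<bar>h 0 r - (\<Sum>j\<le>n. h j 0 * r ^ j / fact j)\<bar> \<le> B * r ^ n / fact n"
proof (induction n arbitrary: h)
  case 0
  then show ?case by simp
next
  case (Suc n)
  have IH: "\<forall>r\<in>{0..R}. \<bar>h 1 r - (\<Sum>j\<le>n. h (Suc j) 0 * r ^ j / fact j)\<bar> \<le> B * r ^ n / fact n"
    using Suc.IH[of "\<lambda>j. h (Suc j)"] Suc.prems by auto
  define \<phi> where "\<phi> s = h 0 s - (\<Sum>j\<le>Suc n. h j 0 * s ^ j / fact j)" for s
  define \<phi>' where "\<phi>' s = h 1 s - (\<Sum>j\<le>n. h (Suc j) 0 * s ^ j / fact j)" for s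
  have d\<phi>: "(\<phi> has_real_derivative \<phi>' s) (at s within {0..R})" if s: "s \<in> {0..R}" for s
  proof -
    have "(h 0 has_real_derivative h 1 s) (at s within {0..R})" using Suc.prems(1) s by auto
    then show ?thesis unfolding \<phi>_def \<phi>'_def
      by (intro DERIV_diff poly_deriv) auto
  qed
  have \<phi>0: "\<phi> 0 = 0"
    unfolding \<phi>_def by (simp add: sum.atMost_shift)
  define E where "E s = B * s ^ Suc n / fact (Suc n)" for s
  have dE: "(E has_real_derivative B * s ^ n / fact n) (at s within {0..R})" for s
  proof -
    have "((\<lambda>s. B / fact (Suc n) * s ^ Suc n) has_real_derivative B / fact (Suc n) * ((1 + of_nat n) * (1 * s ^ n))) (at s within {0..R})"
      by (intro DERIV_cmult DERIV_power_Suc DERIV_ident)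
    moreover have "E = (\<lambda>s. B / fact (Suc n) * s ^ Suc n)" unfolding E_def by (simp add: fun_eq_iff)
    moreover have "B / fact (Suc n) * ((1 + of_nat n) * (1 * s ^ n)) = B * s ^ n / fact n"
    proof -
      have f: "fact (Suc n) = (1 + of_nat n) * (fact n :: real)" by simp
      have a: "(1 + of_nat n :: real) > 0" by simp
      have g: "(fact n :: real) > 0" by simp
      have h: "(fact n :: real) + fact n * real n \<noteq> 0"
      proof -
        have "(fact n :: real) + fact n * real n = fact n * (1 + real n)" by (simp add: algebra_simps)
        then show ?thesis using a g by simp
      qed
      show ?thesis unfolding f using a g h by (simp add: field_simps)
    qed
    ultimately show ?thesis by simp
  qed
  show ?case
  proof
    fix r assume r: "r \<in> {0..R}"
    have up: "\<phi> r - E r \<le> \<phi> 0 - E 0"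
    proof (rule nonpos_deriv_le[OF _ _ r])
      show "((\<lambda>s. \<phi> s - E s) has_real_derivative \<phi>' s - B * s ^ n / fact n) (at s within {0..R})" if "s \<in> {0..R}" for s
        using d\<phi>[OF that] dE[of s] by (intro DERIV_diff)
      show "\<phi>' s - B * s ^ n / fact n \<le> 0" if "s \<in> {0..R}" for s
        using IH that unfolding \<phi>'_def by (auto simp: abs_le_iff)
    qed
    have lo: "- \<phi> r - E r \<le> - \<phi> 0 - E 0"
    proof (rule nonpos_deriv_le[OF _ _ r])
      show "((\<lambda>s. - \<phi> s - E s) has_real_derivative - \<phi>' s - B * s ^ n / fact n) (at s within {0..R})" if "s \<in> {0..R}" for s
        using d\<phi>[OF that] dE[of s] by (intro DERIV_diff DERIV_minus)
      show "- \<phi>' s - B * s ^ n / fact n \<le> 0" if "s \<in> {0..R}" for s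
        using IH that unfolding \<phi>'_def by (auto simp: abs_le_iff)
    qed
    have "E 0 = 0" unfolding E_def by simp
    then have "\<bar>\<phi> r\<bar> \<le> E r" using up lo \<phi>0 by (simp add: abs_le_iff)
    then show "\<bar>h 0 r - (\<Sum>j\<le>Suc n. h j 0 * r ^ j / fact j)\<bar> \<le> B * r ^ Suc n / fact (Suc n)"
      unfolding \<phi>_def E_def .
  qed
qed

lemma mlin3:
  assumes "mlin n T1" "mlin n T2" "mlin n T3"
  shows "mlin n (\<lambda>vs. a * T1 vs + b * T2 vs + c * T3 vs)"
  unfolding mlin_def
proof (intro allI impI)
  fix vs :: "'a list" and i assume "length vs = n" "i < n"
  then have l1: "linear (\<lambda>v. T1 (vs[i := v]))" and l2: "linear (\<lambda>v. T2 (vs[i := v]))"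
    and l3: "linear (\<lambda>v. T3 (vs[i := v]))"
    using assms unfolding mlin_def by auto
  show "linear (\<lambda>v. a * T1 (vs[i := v]) + b * T2 (vs[i := v]) + c * T3 (vs[i := v]))"
    by (rule linearI) (simp_all add: linear_add[OF l1] linear_add[OF l2] linear_add[OF l3]
        linear_scale[OF l1] linear_scale[OF l2] linear_scale[OF l3] algebra_simps)
qed

lemma replicate_scale: "replicate j (c *\<^sub>R e) = map (\<lambda>v. c *\<^sub>R v) (replicate j e)"
  by (induction j) auto

lemma mlin_replicate_zero:
  assumes "mlin j T" "j \<ge> 1"
  shows "T (replicate j 0) = 0"
proof -
  obtain i where j: "j = Suc i" using assms(2) by (cases j) auto
  show ?thesis using mlin_zero[of i T "replicate i 0"] assms(1) j by simp
qed

lemma taylor_poly_zero: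
  fixes G :: "nat \<Rightarrow> 'b::real_normed_vector list \<Rightarrow> real"
  assumes "\<And>j. j \<le> k \<Longrightarrow> mlin j (G j)"
  shows "(\<Sum>j\<le>k. G j (replicate j 0) / fact j) = G 0 []"
proof -
  have "(\<Sum>j\<le>k. G j (replicate j 0) / fact j) = (\<Sum>j\<in>{0}. G j (replicate j 0) / fact j)"
  proof (rule sum.mono_neutral_right)
    show "\<forall>j\<in>{..k} - {0}. G j (replicate j 0) / fact j = 0"
      using assms mlin_replicate_zero by fastforce
  qed auto
  then show ?thesis by simp
qed

lemma taylor_multi:
  fixes G :: "nat \<Rightarrow> 'b::euclidean_space \<Rightarrow> 'b list \<Rightarrow> real"
  assumes Y: "convex Y" and yh: "yhat \<in> Y" and y: "y \<in> Y"
    and d: "\<And>j z vs. j < k \<Longrightarrow> z \<in> Y \<Longrightarrow> length vs = j \<Longrightarrow>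
            ((\<lambda>z'. G j z' vs) has_derivative (\<lambda>h. G (Suc j) z (h # vs))) (at z within Y)"
    and ml: "\<And>j z. j \<le> k \<Longrightarrow> z \<in> Y \<Longrightarrow> mlin j (G j z)"
    and b: "\<And>z vs. z \<in> Y \<Longrightarrow> length vs = k \<Longrightarrow> (\<forall>v\<in>set vs. norm v \<le> 1) \<Longrightarrow> \<bar>G k z vs - G k yhat vs\<bar> \<le> B"
  shows "\<bar>G 0 y [] - (\<Sum>j\<le>k. G j yhat (replicate j (y - yhat)) / fact j)\<bar> \<le> B * norm (y - yhat) ^ k / fact k"
proof (cases "y = yhat")
  case True
  have B0: "0 \<le> B" using b[OF yh, of "replicate k 0"] by simp
  have "(\<Sum>j\<le>k. G j yhat (replicate j (y - yhat)) / fact j) = G 0 yhat []"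
    using True taylor_poly_zero[of k "\<lambda>j. G j yhat"] ml[OF _ yh] by simp
  then show ?thesis using True B0 by simp
next
  case False
  define r where "r = norm (y - yhat)"
  have r: "r > 0" using False unfolding r_def by simp
  define e where "e = (1 / r) *\<^sub>R (y - yhat)"
  have ne: "norm e = 1" unfolding e_def r_def using r r_def by simp
  have ye: "yhat + r *\<^sub>R e = y" unfolding e_def using r by simp
  have inY: "yhat + s *\<^sub>R e \<in> Y" if "s \<in> {0..r}" for s
  proof -
    have "yhat + (s / r) *\<^sub>R (y - yhat) \<in> Y" using seg_in[OF Y yh y, of "s / r"] that r by auto
    moreover have "(s / r) *\<^sub>R (y - yhat) = s *\<^sub>R e" unfolding e_def by simp
    ultimately show ?thesis by simp
  qed
  have img: "(\<lambda>s. yhat + s *\<^sub>R e) ` {0..r} \<subseteq> Y" using inY by blast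
  define h where "h j s = G j (yhat + s *\<^sub>R e) (replicate j e)" for j s
  have dh: "\<forall>j<k. \<forall>s\<in>{0..r}. (h j has_real_derivative h (Suc j) s) (at s within {0..r})"
  proof (intro allI impI ballI)
    fix j s assume j: "j < k" and s: "s \<in> {0..r}"
    let ?z = "yhat + s *\<^sub>R e"
    have z: "?z \<in> Y" using inY[OF s] .
    have dp: "((\<lambda>s. yhat + s *\<^sub>R e) has_derivative (\<lambda>t. t *\<^sub>R e)) (at s within {0..r})"
      by (auto intro!: derivative_eq_intros)
    have dG: "((\<lambda>z'. G j z' (replicate j e)) has_derivative (\<lambda>hh. G (Suc j) ?z (hh # replicate j e))) (at ?z within Y)"
      using d[OF j z] by simp
    have "((\<lambda>z'. G j z' (replicate j e)) \<circ> (\<lambda>s. yhat + s *\<^sub>R e) has_derivative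
          (\<lambda>hh. G (Suc j) ?z (hh # replicate j e)) \<circ> (\<lambda>t. t *\<^sub>R e)) (at s within {0..r})"
      by (rule diff_chain_within[OF dp]) (rule has_derivative_subset[OF dG img])
    moreover have lin: "linear (\<lambda>hh. G (Suc j) ?z (hh # replicate j e))"
      using ml[of "Suc j" ?z] j z unfolding mlin_Suc by simp
    moreover have "((\<lambda>hh. G (Suc j) ?z (hh # replicate j e)) \<circ> (\<lambda>t. t *\<^sub>R e)) = (*) (h (Suc j) s)"
      unfolding h_def using linear_scale[OF lin] by (auto simp: fun_eq_iff)
    ultimately have "((\<lambda>s. G j (yhat + s *\<^sub>R e) (replicate j e)) has_derivative (*) (h (Suc j) s)) (at s within {0..r})"
      by (simp add: o_def)
    then show "(h j has_real_derivative h (Suc j) s) (at s within {0..r})"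
      unfolding has_field_derivative_def h_def[abs_def] by simp
  qed
  have bh: "\<forall>s\<in>{0..r}. \<bar>h k s - h k 0\<bar> \<le> B"
  proof
    fix s assume s: "s \<in> {0..r}"
    show "\<bar>h k s - h k 0\<bar> \<le> B" unfolding h_def using b[OF inY[OF s], of "replicate k e"] ne by simp
  qed
  have T: "\<bar>h 0 r - (\<Sum>j\<le>k. h j 0 * r ^ j / fact j)\<bar> \<le> B * r ^ k / fact k"
    using taylor1d[of k r h B, OF dh bh] r by auto
  have h0: "h 0 r = G 0 y []" unfolding h_def using ye by simp
  have hj: "h j 0 * r ^ j = G j yhat (replicate j (y - yhat))" if "j \<le> k" for j
  proof -
    have "G j yhat (replicate j (y - yhat)) = G j yhat (map (\<lambda>v. r *\<^sub>R v) (replicate j e))"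
    proof -
      have "y - yhat = r *\<^sub>R e" using ye by (simp add: algebra_simps)
      then show ?thesis using replicate_scale[of j r e] by simp
    qed
    also have "\<dots> = r ^ j * G j yhat (replicate j e)" by (rule mlin_homog[OF ml[OF that yh]]) simp
    finally show ?thesis unfolding h_def by simp
  qed
  have "(\<Sum>j\<le>k. h j 0 * r ^ j / fact j) = (\<Sum>j\<le>k. G j yhat (replicate j (y - yhat)) / fact j)"
    by (intro sum.cong refl) (simp add: hj)
  then show ?thesis using T h0 unfolding r_def by simp
qed

lemma ereal_lip_zero:
  fixes rho :: ereal
  assumes "ereal t \<le> rho * ereal (norm (y - y)) + ereal c"
  shows "t \<le> c"
proof -
  have z: "rho * ereal (norm (y - y)) = 0" by (simp add: zero_ereal_def[symmetric])
  have "ereal t \<le> ereal c" using assms unfolding z by simp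
  then show ?thesis by simp
qed

lemma path_lip_cond:
  fixes H :: "'a::real_normed_vector \<Rightarrow> 'a \<Rightarrow> real"
  assumes X: "convex X" and uv: "u \<in> X" "v \<in> X"
    and lipH: "\<And>a b. a \<in> X \<Longrightarrow> b \<in> X \<Longrightarrow> \<bar>H a (v - u) - H b (v - u)\<bar> \<le> c * norm (a - b) * norm (v - u)"
    and s: "0 \<le> s1" "s1 \<le> s2" "s2 \<le> 1"
  shows "\<bar>H (u + s2 *\<^sub>R (v - u)) (v - u) - H (u + s1 *\<^sub>R (v - u)) (v - u)\<bar> \<le> c * (norm (v - u))\<^sup>2 * (s2 - s1)"
proof -
  have a: "u + s2 *\<^sub>R (v - u) \<in> X" using seg_in[OF X uv] s by simp
  have b: "u + s1 *\<^sub>R (v - u) \<in> X" using seg_in[OF X uv] s by simp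
  have n: "norm ((u + s2 *\<^sub>R (v - u)) - (u + s1 *\<^sub>R (v - u))) = (s2 - s1) * norm (v - u)"
  proof -
    have "(u + s2 *\<^sub>R (v - u)) - (u + s1 *\<^sub>R (v - u)) = (s2 - s1) *\<^sub>R (v - u)" by (simp add: algebra_simps)
    then show ?thesis using s by simp
  qed
  have e: "c * ((s2 - s1) * norm (v - u)) * norm (v - u) = c * (norm (v - u))\<^sup>2 * (s2 - s1)"
    by (simp add: power2_eq_square mult_ac)
  show ?thesis using lipH[OF a b] unfolding n e .
qed

lemma path_wc_abs:
  fixes h :: "'a::euclidean_space \<Rightarrow> real" and H :: "'a \<Rightarrow> 'a \<Rightarrow> real"
  assumes X: "convex X" and uv: "u \<in> X" "v \<in> X"
    and d: "\<And>x. x \<in> X \<Longrightarrow> (h has_derivative H x) (at x within X)"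
    and lipH: "\<And>a b. a \<in> X \<Longrightarrow> b \<in> X \<Longrightarrow> \<bar>H a (v - u) - H b (v - u)\<bar> \<le> c * norm (a - b) * norm (v - u)"
    and t: "0 \<le> t" "t \<le> 1"
  shows "\<bar>(1 - t) * h u + t * h v - h (u + t *\<^sub>R (v - u))\<bar> \<le> c / 2 * t * (1 - t) * (norm (v - u))\<^sup>2"
proof -
  let ?K = "c * (norm (v - u))\<^sup>2"
  have lc: "\<bar>H (u + s2 *\<^sub>R (v - u)) (v - u) - H (u + s1 *\<^sub>R (v - u)) (v - u)\<bar> \<le> ?K * (s2 - s1)"
    if "0 \<le> s1" "s1 \<le> s2" "s2 \<le> 1" for s1 s2
    by (rule path_lip_cond[where H=H, OF X uv lipH that])
  have A: "h (u + t *\<^sub>R (v - u)) \<le> (1 - t) * h u + t * h v + ?K / 2 * t * (1 - t)"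
  proof (rule path_wc(1)[OF X uv d _ t])
    show "- ?K * (s2 - s1) \<le> H (u + s2 *\<^sub>R (v - u)) (v - u) - H (u + s1 *\<^sub>R (v - u)) (v - u)"
      if "0 \<le> s1" "s1 \<le> s2" "s2 \<le> 1" for s1 s2
      using lc[OF that] by (simp add: abs_le_iff)
  qed
  have B: "(\<lambda>x. - h x) (u + t *\<^sub>R (v - u)) \<le> (1 - t) * (- h u) + t * (- h v) + ?K / 2 * t * (1 - t)"
  proof (rule path_wc(1)[OF X uv, where H="\<lambda>x w. - H x w", OF _ _ t])
    show "((\<lambda>x. - h x) has_derivative (\<lambda>w. - H x w)) (at x within X)" if "x \<in> X" for x
      using d[OF that] by (rule has_derivative_minus)
    show "- ?K * (s2 - s1) \<le> - H (u + s2 *\<^sub>R (v - u)) (v - u) - - H (u + s1 *\<^sub>R (v - u)) (v - u)"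
      if "0 \<le> s1" "s1 \<le> s2" "s2 \<le> 1" for s1 s2
      using lc[OF that] by (simp add: abs_le_iff)
  qed
  have e: "?K / 2 * t * (1 - t) = c / 2 * t * (1 - t) * (norm (v - u))\<^sup>2" by (simp add: algebra_simps)
  have A': "h (u + t *\<^sub>R (v - u)) \<le> (1 - t) * h u + t * h v + c / 2 * t * (1 - t) * (norm (v - u))\<^sup>2"
    using A unfolding e .
  have B': "- h (u + t *\<^sub>R (v - u)) \<le> - ((1 - t) * h u) + - (t * h v) + c / 2 * t * (1 - t) * (norm (v - u))\<^sup>2"
    using B unfolding e mult_minus_right .
  have "(1 - t) * h u + t * h v - h (u + t *\<^sub>R (v - u)) \<le> c / 2 * t * (1 - t) * (norm (v - u))\<^sup>2"
    using B' by linarith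
  moreover have "- ((1 - t) * h u + t * h v - h (u + t *\<^sub>R (v - u))) \<le> c / 2 * t * (1 - t) * (norm (v - u))\<^sup>2"
    using A' by linarith
  ultimately show ?thesis by (simp only: abs_le_iff)
qed

locale prob =
  fixes f :: "'a::euclidean_space \<Rightarrow> 'b::euclidean_space \<Rightarrow> real"
    and X :: "'a set" and Y :: "'b set"
    and D lam mu sigma tau :: real and rho :: ereal
    and k :: nat and yhat :: "'b"
    and Gx :: "'a \<Rightarrow> 'b \<Rightarrow> 'a"
    and Dy :: "nat \<Rightarrow> 'a \<Rightarrow> 'b \<Rightarrow> 'b list \<Rightarrow> real"
    and Dxy :: "'a \<Rightarrow> 'b \<Rightarrow> 'a \<Rightarrow> 'b list \<Rightarrow> real"
  assumes X: "convex X" "interior X \<noteq> {}"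
    and Y: "convex Y" "compact Y" "interior Y \<noteq> {}"
    and D: "diameter Y \<le> D"
    and yhat: "yhat \<in> Y"
    and nonneg: "0 \<le> lam" "0 \<le> mu" "0 \<le> sigma" "0 \<le> tau"
    and Gx_deriv: "\<And>x y. x \<in> X \<Longrightarrow> y \<in> Y \<Longrightarrow>
          ((\<lambda>x'. f x' y) has_derivative (\<lambda>h. Gx x y \<bullet> h)) (at x within X)"
    and Gx_lip: "\<And>x x' y y'. x \<in> X \<Longrightarrow> x' \<in> X \<Longrightarrow> y \<in> Y \<Longrightarrow> y' \<in> Y \<Longrightarrow>
          norm (Gx x' y' - Gx x y) \<le> lam * norm (x' - x) + mu * norm (y' - y)"
    and Dy0: "\<And>x y. x \<in> X \<Longrightarrow> y \<in> Y \<Longrightarrow> Dy 0 x y [] = f x y"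
    and Dy_deriv: "\<And>j x y vs. j < k \<Longrightarrow> x \<in> X \<Longrightarrow> y \<in> Y \<Longrightarrow> length vs = j \<Longrightarrow>
          ((\<lambda>y'. Dy j x y' vs) has_derivative (\<lambda>h. Dy (Suc j) x y (h # vs))) (at y within Y)"
    and Dy_lip: "\<And>x x' y y'. x \<in> X \<Longrightarrow> x' \<in> X \<Longrightarrow> y \<in> Y \<Longrightarrow> y' \<in> Y \<Longrightarrow>
          ereal (tnorm k (\<lambda>vs. Dy k x' y' vs - Dy k x y vs))
            \<le> rho * ereal (norm (y' - y)) + ereal (sigma * norm (x' - x))"
    and iii1: "k \<ge> 1 \<Longrightarrow> x \<in> X \<Longrightarrow> y \<in> Y \<Longrightarrow> length vs = k \<Longrightarrow>
              ((\<lambda>x'. Dy k x' y vs) has_derivative (\<lambda>u. Dxy x y u vs)) (at x within X)"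
    and iii2: "k \<ge> 1 \<Longrightarrow> x \<in> X \<Longrightarrow> x' \<in> X \<Longrightarrow> y \<in> Y \<Longrightarrow>
              tnorm_x k (\<lambda>u vs. Dxy x' y u vs - Dxy x y u vs) \<le> tau * norm (x' - x)"
begin

lemma Xne: "X \<noteq> {}" using X(2) interior_subset by blast
lemma Yne: "Y \<noteq> {}" using yhat by blast
lemma bY: "bounded Y" using Y(2) compact_imp_bounded by blast

lemma dist_D: "y \<in> Y \<Longrightarrow> norm (y - yhat) \<le> D"
  using diameter_bounded_bound[OF bY, of y yhat] D yhat by (simp add: dist_norm)

lemma D0: "0 \<le> D" using dist_D[OF yhat] by simp

lemma Gx_same: "x \<in> X \<Longrightarrow> x' \<in> X \<Longrightarrow> y \<in> Y \<Longrightarrow> norm (Gx x' y - Gx x y) \<le> lam * norm (x' - x)"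
  using Gx_lip[of x x' y y] by simp

lemma Gx_diff: "x \<in> X \<Longrightarrow> y \<in> Y \<Longrightarrow> norm (Gx x y - Gx x yhat) \<le> mu * D"
proof -
  assume a: "x \<in> X" "y \<in> Y"
  have "norm (Gx x y - Gx x yhat) \<le> mu * norm (y - yhat)" using Gx_lip[OF a(1) a(1) yhat a(2)] by simp
  also have "\<dots> \<le> mu * D" using dist_D[OF a(2)] nonneg(2) by (rule mult_left_mono)
  finally show ?thesis .
qed

lemma f_wc: "y \<in> Y \<Longrightarrow> wc (\<lambda>x. f x y) X lam"
  unfolding wc_def
proof (intro ballI allI impI)
  fix u v and t :: real assume y: "y \<in> Y" and uv: "u \<in> X" "v \<in> X" and t: "0 \<le> t" "t \<le> 1"
  have "\<bar>(1 - t) * f u y + t * f v y - f (u + t *\<^sub>R (v - u)) y\<bar> \<le> lam / 2 * t * (1 - t) * (norm (v - u))\<^sup>2"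
  proof (rule path_wc_abs[OF X(1) uv _ _ t])
    show "((\<lambda>x. f x y) has_derivative (\<lambda>h. Gx x y \<bullet> h)) (at x within X)" if "x \<in> X" for x
      using Gx_deriv[OF that y] .
    show "\<bar>Gx a y \<bullet> (v - u) - Gx b y \<bullet> (v - u)\<bar> \<le> lam * norm (a - b) * norm (v - u)" if "a \<in> X" "b \<in> X" for a b
    proof -
      have "\<bar>Gx a y \<bullet> (v - u) - Gx b y \<bullet> (v - u)\<bar> = \<bar>(Gx a y - Gx b y) \<bullet> (v - u)\<bar>" by (simp add: inner_diff_left)
      also have "\<dots> \<le> norm (Gx a y - Gx b y) * norm (v - u)" by (rule Cauchy_Schwarz_ineq2)
      also have "\<dots> \<le> lam * norm (a - b) * norm (v - u)"
        using Gx_same[OF that(2) that(1) y] by (intro mult_right_mono) auto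
      finally show ?thesis .
    qed
  qed
  then have "- ((1 - t) * f u y + t * f v y - f (u + t *\<^sub>R (v - u)) y) \<le> lam / 2 * t * (1 - t) * (norm (v - u))\<^sup>2"
    by (rule abs_le_D2)
  then show "f (u + t *\<^sub>R (v - u)) y \<le> (1 - t) * f u y + t * f v y + lam / 2 * t * (1 - t) * (norm (v - u))\<^sup>2"
    by linarith
qed

lemma f_lb: "y \<in> Y \<Longrightarrow> u \<in> X \<Longrightarrow> v \<in> X \<Longrightarrow> f u y + Gx u y \<bullet> (v - u) - lam * (norm (v - u))\<^sup>2 / 2 \<le> f v y"
proof -
  assume y: "y \<in> Y" and uv: "u \<in> X" "v \<in> X"
  show ?thesis
  proof (rule path_wc(2)[OF X(1) uv, where H="\<lambda>x h. Gx x y \<bullet> h"])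
    show "((\<lambda>x. f x y) has_derivative (\<lambda>h. Gx x y \<bullet> h)) (at x within X)" if "x \<in> X" for x
      using Gx_deriv[OF that y] .
    show "- (lam * (norm (v - u))\<^sup>2) * (s2 - s1) \<le> Gx (u + s2 *\<^sub>R (v - u)) y \<bullet> (v - u) - Gx (u + s1 *\<^sub>R (v - u)) y \<bullet> (v - u)"
      if s: "0 \<le> s1" "s1 \<le> s2" "s2 \<le> 1" for s1 s2
    proof -
      have "\<bar>Gx (u + s2 *\<^sub>R (v - u)) y \<bullet> (v - u) - Gx (u + s1 *\<^sub>R (v - u)) y \<bullet> (v - u)\<bar> \<le> lam * (norm (v - u))\<^sup>2 * (s2 - s1)"
      proof (rule path_lip_cond[OF X(1) uv _ s])
        show "\<bar>Gx a y \<bullet> (v - u) - Gx b y \<bullet> (v - u)\<bar> \<le> lam * norm (a - b) * norm (v - u)" if "a \<in> X" "b \<in> X" for a b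
        proof -
          have "\<bar>Gx a y \<bullet> (v - u) - Gx b y \<bullet> (v - u)\<bar> = \<bar>(Gx a y - Gx b y) \<bullet> (v - u)\<bar>" by (simp add: inner_diff_left)
          also have "\<dots> \<le> norm (Gx a y - Gx b y) * norm (v - u)" by (rule Cauchy_Schwarz_ineq2)
          also have "\<dots> \<le> lam * norm (a - b) * norm (v - u)"
            using Gx_same[OF that(2) that(1) y] by (intro mult_right_mono) auto
          finally show ?thesis .
        qed
      qed
      then show ?thesis by (simp add: abs_le_iff)
    qed
  qed
qed

lemma f_diff_lip:
  assumes y: "y \<in> Y" and x: "x \<in> X" "x' \<in> X"
  shows "\<bar>(f x' y - f x' yhat) - (f x y - f x yhat)\<bar> \<le> mu * D * norm (x' - x)"
proof -
  have "norm ((\<lambda>z. f z y - f z yhat) x' - (\<lambda>z. f z y - f z yhat) x) \<le> mu * D * norm (x' - x)"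
  proof (rule differentiable_bound[OF X(1) _ _ x(2) x(1)])
    show "((\<lambda>z. f z y - f z yhat) has_derivative (\<lambda>h. (Gx z y - Gx z yhat) \<bullet> h)) (at z within X)" if "z \<in> X" for z
      using has_derivative_diff[OF Gx_deriv[OF that y] Gx_deriv[OF that yhat]] by (simp add: inner_diff_left)
    show "onorm (\<lambda>h. (Gx z y - Gx z yhat) \<bullet> h) \<le> mu * D" if "z \<in> X" for z
    proof (rule onorm_le)
      fix h
      have "norm ((Gx z y - Gx z yhat) \<bullet> h) \<le> norm (Gx z y - Gx z yhat) * norm h"
        by (simp add: Cauchy_Schwarz_ineq2)
      also have "\<dots> \<le> mu * D * norm h" using Gx_diff[OF that y] by (intro mult_right_mono) auto
      finally show "norm ((Gx z y - Gx z yhat) \<bullet> h) \<le> mu * D * norm h" .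
    qed
  qed
  then show ?thesis by simp
qed

end

lemma mlin_diff:
  assumes "mlin n T1" "mlin n T2"
  shows "mlin n (\<lambda>vs. T1 vs - T2 vs)"
proof -
  have "mlin n (\<lambda>vs. 1 * T1 vs + (- 1) * T2 vs + 0 * T2 vs)" by (rule mlin3[OF assms assms(2)])
  then show ?thesis by simp
qed

lemma linear_diff_real:
  fixes f g :: "'a::real_vector \<Rightarrow> real"
  assumes "linear f" "linear g"
  shows "linear (\<lambda>x. f x - g x)"
  by (rule linearI) (simp_all add: linear_add[OF assms(1)] linear_add[OF assms(2)]
      linear_scale[OF assms(1)] linear_scale[OF assms(2)] algebra_simps)

lemma mlin_poly_bound:
  fixes T :: "'b::real_normed_vector list \<Rightarrow> real"
  assumes ml: "mlin j T" and B: "\<And>vs. length vs = j \<Longrightarrow> (\<forall>v\<in>set vs. norm v \<le> 1) \<Longrightarrow> \<bar>T vs\<bar> \<le> B"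
    and d: "norm d \<le> D"
  shows "\<bar>T (replicate j d)\<bar> \<le> B * (1 + D) ^ j"
proof -
  have B0: "0 \<le> B" using B[of "replicate j 0"] by simp
  have D0: "0 \<le> D" using d norm_ge_zero order_trans by blast
  have p1: "1 \<le> (1 + D) ^ j" using D0 by (simp add: one_le_power)
  show ?thesis
  proof (cases "norm d \<le> 1")
    case True
    then have "\<bar>T (replicate j d)\<bar> \<le> B" using B[of "replicate j d"] by simp
    also have "\<dots> \<le> B * (1 + D) ^ j" using B0 p1 by (simp add: mult_le_cancel_left1)
    finally show ?thesis .
  next
    case False
    define r where "r = norm d"
    have r: "r > 1" using False unfolding r_def by simp
    define e where "e = (1 / r) *\<^sub>R d"
    have ne: "norm e = 1" unfolding e_def r_def using r r_def by (auto simp: norm_eq_zero)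
    have de: "d = r *\<^sub>R e" unfolding e_def using r by simp
    have "T (replicate j d) = r ^ j * T (replicate j e)"
      unfolding de replicate_scale by (rule mlin_homog[OF ml]) simp
    then have "\<bar>T (replicate j d)\<bar> = r ^ j * \<bar>T (replicate j e)\<bar>" using r by (simp add: abs_mult)
    also have "\<dots> \<le> r ^ j * B" using B[of "replicate j e"] ne r by (intro mult_left_mono) auto
    also have "\<dots> \<le> (1 + D) ^ j * B" using d r B0 unfolding r_def by (intro mult_right_mono power_mono) auto
    finally show ?thesis by (simp add: mult.commute)
  qed
qed

context prob
begin

abbreviation "hf x y \<equiv> (\<Sum>j\<le>k. Dy j x yhat (replicate j (y - yhat)) / fact j)"

lemma Dy_mlin: "j \<le> k \<Longrightarrow> x \<in> X \<Longrightarrow> y \<in> Y \<Longrightarrow> mlin j (Dy j x y)"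
proof (induction j arbitrary: y)
  case 0
  then show ?case by simp
next
  case (Suc j)
  have jk: "j < k" using Suc.prems by simp
  show ?case unfolding mlin_Suc
  proof (intro conjI allI impI)
    fix ws :: "'b list" assume "length ws = j"
    from Dy_deriv[OF jk Suc.prems(2,3) this] show "linear (\<lambda>h. Dy (Suc j) x y (h # ws))"
      using has_derivative_linear by blast
  next
    fix h :: 'b
    show "mlin j (\<lambda>ws. Dy (Suc j) x y (h # ws))"
    proof (rule deriv_mlin[OF Y(1) Y(3) Suc.prems(3), where F="\<lambda>y'. Dy j x y'" and F'="\<lambda>h vs. Dy (Suc j) x y (h # vs)"])
      show "mlin j (Dy j x y')" if "y' \<in> Y" for y' using Suc.IH[OF _ Suc.prems(2) that] jk by simp
      show "((\<lambda>y'. Dy j x y' vs) has_derivative (\<lambda>h. Dy (Suc j) x y (h # vs))) (at y within Y)" if "length vs = j" for vs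
        using Dy_deriv[OF jk Suc.prems(2,3) that] .
    qed
  qed
qed

lemma Dxy_lin: "k \<ge> 1 \<Longrightarrow> x \<in> X \<Longrightarrow> y \<in> Y \<Longrightarrow> length vs = k \<Longrightarrow> linear (\<lambda>u. Dxy x y u vs)"
  using iii1 has_derivative_linear by blast

lemma Dxy_mlin: "k \<ge> 1 \<Longrightarrow> x \<in> X \<Longrightarrow> y \<in> Y \<Longrightarrow> mlin k (Dxy x y u)"
proof -
  assume a: "k \<ge> 1" "x \<in> X" "y \<in> Y"
  show ?thesis
  proof (rule deriv_mlin[OF X(1) X(2) a(2), where F="\<lambda>x'. Dy k x' y" and F'="\<lambda>u vs. Dxy x y u vs"])
    show "mlin k (Dy k x' y)" if "x' \<in> X" for x' using Dy_mlin[OF _ that a(3)] by simp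
    show "((\<lambda>x'. Dy k x' y vs) has_derivative (\<lambda>u. Dxy x y u vs)) (at x within X)" if "length vs = k" for vs
      using iii1[OF a that] .
  qed
qed

lemma Dy_k_lip:
  assumes "x \<in> X" "x' \<in> X" "z \<in> Y" "length vs = k" "\<forall>v\<in>set vs. norm v \<le> 1"
  shows "\<bar>Dy k x' z vs - Dy k x z vs\<bar> \<le> sigma * norm (x' - x)"
proof -
  have ml: "mlin k (\<lambda>vs. Dy k x' z vs - Dy k x z vs)"
    using mlin_diff[OF Dy_mlin[OF _ assms(2,3)] Dy_mlin[OF _ assms(1,3)]] by simp
  have "\<bar>Dy k x' z vs - Dy k x z vs\<bar> \<le> tnorm k (\<lambda>vs. Dy k x' z vs - Dy k x z vs)"
    using tnorm_ge[OF ml assms(4,5)] .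
  also have "\<dots> \<le> sigma * norm (x' - x)"
    using Dy_lip[OF assms(1,2,3,3)] by (rule ereal_lip_zero)
  finally show ?thesis .
qed

lemma Dxy_bound:
  assumes k: "k \<ge> 1" and x: "x1 \<in> X" "x2 \<in> X" and z: "z \<in> Y" and vs: "length vs = k" "\<forall>v\<in>set vs. norm v \<le> 1"
  shows "\<bar>Dxy x2 z w vs - Dxy x1 z w vs\<bar> \<le> tau * norm (x2 - x1) * norm w"
proof -
  define T where "T u vs = Dxy x2 z u vs - Dxy x1 z u vs" for u vs
  have linT: "linear (\<lambda>u. T u vs)" if "length vs = k" for vs
    unfolding T_def by (rule linear_diff_real[OF Dxy_lin[OF k x(2) z that] Dxy_lin[OF k x(1) z that]])
  have mlT: "mlin k (T u)" for u
    unfolding T_def by (rule mlin_diff[OF Dxy_mlin[OF k x(2) z] Dxy_mlin[OF k x(1) z]])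
  show ?thesis
  proof (cases "w = 0")
    case True
    then show ?thesis using linear_0[OF linT[OF vs(1)]] unfolding T_def by simp
  next
    case False
    define e where "e = (1 / norm w) *\<^sub>R w"
    have ne: "norm e = 1" unfolding e_def using False by simp
    have we: "w = norm w *\<^sub>R e" unfolding e_def using False by simp
    have "T w vs = norm w * T e vs" by (subst we) (simp add: linear_scale[OF linT[OF vs(1)]])
    then have "\<bar>T w vs\<bar> = norm w * \<bar>T e vs\<bar>" by (simp add: abs_mult)
    also have "\<dots> \<le> norm w * tnorm_x k T"
      using tnorm_x_ge[OF linT mlT _ vs] ne by (intro mult_left_mono) auto
    also have "\<dots> \<le> norm w * (tau * norm (x2 - x1))"
      using iii2[OF k x(1) x(2) z] unfolding T_def[abs_def] by (intro mult_left_mono) auto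
    finally show ?thesis unfolding T_def by (simp add: mult_ac)
  qed
qed

lemma Dy_k_wc:
  assumes k: "k \<ge> 1" and uv: "u \<in> X" "v \<in> X" and z: "z \<in> Y" and vs: "length vs = k" "\<forall>v\<in>set vs. norm v \<le> 1"
    and t: "0 \<le> t" "t \<le> 1"
  shows "\<bar>(1 - t) * Dy k u z vs + t * Dy k v z vs - Dy k (u + t *\<^sub>R (v - u)) z vs\<bar> \<le> tau / 2 * t * (1 - t) * (norm (v - u))\<^sup>2"
proof (rule path_wc_abs[OF X(1) uv, where H="\<lambda>x w. Dxy x z w vs", OF _ _ t])
  show "((\<lambda>x. Dy k x z vs) has_derivative (\<lambda>w. Dxy x z w vs)) (at x within X)" if "x \<in> X" for x
    using iii1[OF k that z vs(1)] .
  show "\<bar>Dxy a z (v - u) vs - Dxy b z (v - u) vs\<bar> \<le> tau * norm (a - b) * norm (v - u)" if "a \<in> X" "b \<in> X" for a b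
    using Dxy_bound[OF k that(2) that(1) z vs] .
qed

end

lemma abs_diff_le2: "\<bar>a\<bar> \<le> m \<Longrightarrow> \<bar>b\<bar> \<le> m \<Longrightarrow> \<bar>a - b\<bar> \<le> 2 * (m::real)"
  by (simp add: abs_le_iff)

lemma sum_comb3:
  fixes A B C :: "nat \<Rightarrow> real"
  shows "(\<Sum>j\<le>k. (a * A j + b * B j + c * C j) / fact j)
       = a * (\<Sum>j\<le>k. A j / fact j) + b * (\<Sum>j\<le>k. B j / fact j) + c * (\<Sum>j\<le>k. C j / fact j)"
  by (simp add: sum.distrib sum_distrib_left add_divide_distrib)

context prob
begin

lemma hf_yhat: "x \<in> X \<Longrightarrow> hf x yhat = f x yhat"
proof -
  assume x: "x \<in> X"
  have "hf x yhat = (\<Sum>j\<le>k. Dy j x yhat (replicate j 0) / fact j)" by simp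
  also have "\<dots> = Dy 0 x yhat []"
    by (rule taylor_poly_zero[of k "\<lambda>j. Dy j x yhat"]) (rule Dy_mlin[OF _ x yhat])
  also have "\<dots> = f x yhat" using Dy0[OF x yhat] .
  finally show ?thesis .
qed

lemma taylor_comb:
  assumes y: "y \<in> Y" and x: "x1 \<in> X" "x2 \<in> X" "x3 \<in> X"
    and b: "\<And>z vs. z \<in> Y \<Longrightarrow> length vs = k \<Longrightarrow> (\<forall>v\<in>set vs. norm v \<le> 1) \<Longrightarrow>
      \<bar>(a * Dy k x1 z vs + b * Dy k x2 z vs + c * Dy k x3 z vs) - (a * Dy k x1 yhat vs + b * Dy k x2 yhat vs + c * Dy k x3 yhat vs)\<bar> \<le> B"
  shows "\<bar>(a * f x1 y + b * f x2 y + c * f x3 y) - (a * hf x1 y + b * hf x2 y + c * hf x3 y)\<bar> \<le> B * norm (y - yhat) ^ k / fact k"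
proof -
  define G where "G j z vs = a * Dy j x1 z vs + b * Dy j x2 z vs + c * Dy j x3 z vs" for j z vs
  have T: "\<bar>G 0 y [] - (\<Sum>j\<le>k. G j yhat (replicate j (y - yhat)) / fact j)\<bar> \<le> B * norm (y - yhat) ^ k / fact k"
  proof (rule taylor_multi[OF Y(1) yhat y])
    show "((\<lambda>z'. G j z' vs) has_derivative (\<lambda>h. G (Suc j) z (h # vs))) (at z within Y)"
      if "j < k" "z \<in> Y" "length vs = j" for j z vs
      unfolding G_def
      by (intro has_derivative_add has_derivative_mult_right Dy_deriv that x)
    show "mlin j (G j z)" if "j \<le> k" "z \<in> Y" for j z
      unfolding G_def by (rule mlin3[OF Dy_mlin[OF that(1) x(1) that(2)] Dy_mlin[OF that(1) x(2) that(2)] Dy_mlin[OF that(1) x(3) that(2)]])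
    show "\<bar>G k z vs - G k yhat vs\<bar> \<le> B" if "z \<in> Y" "length vs = k" "\<forall>v\<in>set vs. norm v \<le> 1" for z vs
      unfolding G_def using b[OF that] .
  qed
  have g0: "G 0 y [] = a * f x1 y + b * f x2 y + c * f x3 y" unfolding G_def using Dy0 x y by simp
  have gs: "(\<Sum>j\<le>k. G j yhat (replicate j (y - yhat)) / fact j) = a * hf x1 y + b * hf x2 y + c * hf x3 y"
    unfolding G_def by (rule sum_comb3)
  show ?thesis using T unfolding g0 gs .
qed

lemma hat_wc:
  assumes k: "k \<ge> 1" and y: "y \<in> Y"
  shows "wc (\<lambda>x. hf x y) X (lam + 2 * tau * D ^ k / fact k)"
  unfolding wc_def
proof (intro ballI allI impI)
  fix u v and t :: real assume uv: "u \<in> X" "v \<in> X" and t: "0 \<le> t" "t \<le> 1"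
  define w where "w = u + t *\<^sub>R (v - u)"
  have w: "w \<in> X" unfolding w_def using seg_in[OF X(1) uv t] .
  define P where "P = t * (1 - t) * (norm (v - u))\<^sup>2"
  have P0: "0 \<le> P" unfolding P_def using t by simp
  have TB: "\<bar>((1 - t) * f u y + t * f v y + (- 1) * f w y) - ((1 - t) * hf u y + t * hf v y + (- 1) * hf w y)\<bar>
        \<le> (tau * P) * norm (y - yhat) ^ k / fact k"
  proof (rule taylor_comb[OF y uv w])
    fix z and vs :: "'b list" assume z: "z \<in> Y" and vs: "length vs = k" "\<forall>q\<in>set vs. norm q \<le> 1"
    have e1: "\<bar>(1 - t) * Dy k u z vs + t * Dy k v z vs - Dy k w z vs\<bar> \<le> tau / 2 * t * (1 - t) * (norm (v - u))\<^sup>2"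
      unfolding w_def by (rule Dy_k_wc[OF k uv z vs t])
    have e2: "\<bar>(1 - t) * Dy k u yhat vs + t * Dy k v yhat vs - Dy k w yhat vs\<bar> \<le> tau / 2 * t * (1 - t) * (norm (v - u))\<^sup>2"
      unfolding w_def by (rule Dy_k_wc[OF k uv yhat vs t])
    have e3: "tau / 2 * t * (1 - t) * (norm (v - u))\<^sup>2 = tau * P / 2" unfolding P_def by simp
    show "\<bar>((1 - t) * Dy k u z vs + t * Dy k v z vs + (- 1) * Dy k w z vs) - ((1 - t) * Dy k u yhat vs + t * Dy k v yhat vs + (- 1) * Dy k w yhat vs)\<bar> \<le> tau * P"
    proof -
      have "\<bar>((1 - t) * Dy k u z vs + t * Dy k v z vs - Dy k w z vs) - ((1 - t) * Dy k u yhat vs + t * Dy k v yhat vs - Dy k w yhat vs)\<bar> \<le> 2 * (tau * P / 2)"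
        using abs_diff_le2[OF e1[unfolded e3] e2[unfolded e3]] .
      then show ?thesis by simp
    qed
  qed
  have pw: "norm (y - yhat) ^ k \<le> D ^ k" using dist_D[OF y] by (intro power_mono) auto
  have TB2: "(tau * P) * norm (y - yhat) ^ k / fact k \<le> (tau * P) * D ^ k / fact k"
    using pw P0 nonneg(4) by (intro divide_right_mono mult_left_mono) auto
  have fw: "f w y \<le> (1 - t) * f u y + t * f v y + lam / 2 * P"
  proof -
    have "f w y \<le> (1 - t) * f u y + t * f v y + lam / 2 * t * (1 - t) * (norm (v - u))\<^sup>2"
      using f_wc[OF y] uv t unfolding wc_def w_def by blast
    moreover have "lam / 2 * t * (1 - t) * (norm (v - u))\<^sup>2 = lam / 2 * P" unfolding P_def by (simp add: mult_ac)
    ultimately show ?thesis by linarith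
  qed
  have lowr: "- ((1 - t) * hf u y + t * hf v y - hf w y) \<le> lam / 2 * P + (tau * P) * D ^ k / fact k"
    using TB TB2 fw by (simp add: abs_le_iff)
  have eq: "(lam + 2 * tau * D ^ k / fact k) / 2 * t * (1 - t) * (norm (v - u))\<^sup>2 = lam / 2 * P + (tau * P) * D ^ k / fact k"
    unfolding P_def by (simp add: field_simps)
  show "hf (u + t *\<^sub>R (v - u)) y \<le> (1 - t) * hf u y + t * hf v y + (lam + 2 * tau * D ^ k / fact k) / 2 * t * (1 - t) * (norm (v - u))\<^sup>2"
    unfolding eq using lowr unfolding w_def by linarith
qed

lemma hat_lip:
  assumes y: "y \<in> Y" and x: "x \<in> X" "x' \<in> X"
  shows "\<bar>(hf x' y - f x' yhat) - (hf x y - f x yhat)\<bar> \<le> (mu * D + 2 * sigma * D ^ k / fact k) * norm (x' - x)"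
proof -
  have TB: "\<bar>(1 * f x' y + (- 1) * f x y + 0 * f x y) - (1 * hf x' y + (- 1) * hf x y + 0 * hf x y)\<bar>
        \<le> (2 * sigma * norm (x' - x)) * norm (y - yhat) ^ k / fact k"
  proof (rule taylor_comb[OF y x(2) x(1) x(1)])
    fix z and vs :: "'b list" assume z: "z \<in> Y" and vs: "length vs = k" "\<forall>v\<in>set vs. norm v \<le> 1"
    have e1: "\<bar>Dy k x' z vs - Dy k x z vs\<bar> \<le> sigma * norm (x' - x)" by (rule Dy_k_lip[OF x z vs])
    have e2: "\<bar>Dy k x' yhat vs - Dy k x yhat vs\<bar> \<le> sigma * norm (x' - x)" by (rule Dy_k_lip[OF x yhat vs])
    show "\<bar>(1 * Dy k x' z vs + (- 1) * Dy k x z vs + 0 * Dy k x z vs) - (1 * Dy k x' yhat vs + (- 1) * Dy k x yhat vs + 0 * Dy k x yhat vs)\<bar>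
        \<le> 2 * sigma * norm (x' - x)"
      using abs_diff_le2[OF e1 e2] by simp
  qed
  have pw: "norm (y - yhat) ^ k \<le> D ^ k" using dist_D[OF y] by (intro power_mono) auto
  have TB2: "(2 * sigma * norm (x' - x)) * norm (y - yhat) ^ k / fact k \<le> (2 * sigma * norm (x' - x)) * D ^ k / fact k"
    using pw nonneg(3) by (intro divide_right_mono mult_left_mono) auto
  have FL: "\<bar>(f x' y - f x' yhat) - (f x y - f x yhat)\<bar> \<le> mu * D * norm (x' - x)" by (rule f_diff_lip[OF y x])
  have eq: "(mu * D + 2 * sigma * D ^ k / fact k) * norm (x' - x) = mu * D * norm (x' - x) + (2 * sigma * norm (x' - x)) * D ^ k / fact k"
    by (simp add: algebra_simps)
  show ?thesis unfolding eq using TB TB2 FL by (simp add: abs_le_iff)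
qed

lemma f_bdd: "k \<ge> 1 \<Longrightarrow> x \<in> X \<Longrightarrow> bdd_above ((\<lambda>y. f x y) ` Y)"
proof -
  assume k: "k \<ge> 1" and x: "x \<in> X"
  have "continuous_on Y (\<lambda>y. Dy 0 x y [])"
    unfolding continuous_on_eq_continuous_within
  proof
    fix y assume y: "y \<in> Y"
    show "continuous (at y within Y) (\<lambda>y. Dy 0 x y [])"
      using Dy_deriv[of 0 x y "[]"] k x y by (intro has_derivative_continuous) auto
  qed
  then have "continuous_on Y (\<lambda>y. f x y)"
    by (rule continuous_on_eq) (use Dy0 x in auto)
  then have "compact ((\<lambda>y. f x y) ` Y)" using Y(2) by (rule compact_continuous_image)
  then show ?thesis by (intro bounded_imp_bdd_above compact_imp_bounded)
qed

lemma hf_bdd: "x \<in> X \<Longrightarrow> bdd_above ((\<lambda>y. hf x y) ` Y)"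
proof -
  assume x: "x \<in> X"
  have "\<forall>j. \<exists>B. j \<le> k \<longrightarrow> (\<forall>vs. length vs = j \<longrightarrow> (\<forall>v\<in>set vs. norm v \<le> 1) \<longrightarrow> \<bar>Dy j x yhat vs\<bar> \<le> B)"
    using mlin_bounded[OF Dy_mlin[OF _ x yhat]] by blast
  then obtain Bf where Bf: "\<forall>j. j \<le> k \<longrightarrow> (\<forall>vs. length vs = j \<longrightarrow> (\<forall>v\<in>set vs. norm v \<le> 1) \<longrightarrow> \<bar>Dy j x yhat vs\<bar> \<le> Bf j)"
    by (metis choice)
  show ?thesis
  proof (rule bdd_aboveI2[where M="\<Sum>j\<le>k. Bf j * (1 + D) ^ j / fact j"])
    fix y assume y: "y \<in> Y"
    have "hf x y \<le> \<bar>hf x y\<bar>" by simp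
    also have "\<dots> \<le> (\<Sum>j\<le>k. \<bar>Dy j x yhat (replicate j (y - yhat)) / fact j\<bar>)" by (rule sum_abs)
    also have "\<dots> \<le> (\<Sum>j\<le>k. Bf j * (1 + D) ^ j / fact j)"
    proof (rule sum_mono)
      fix j assume j: "j \<in> {..k}"
      have "\<bar>Dy j x yhat (replicate j (y - yhat))\<bar> \<le> Bf j * (1 + D) ^ j"
        by (rule mlin_poly_bound[OF Dy_mlin[OF _ x yhat]]) (use j Bf dist_D[OF y] in auto)
      then show "\<bar>Dy j x yhat (replicate j (y - yhat)) / fact j\<bar> \<le> Bf j * (1 + D) ^ j / fact j"
        by (simp add: divide_right_mono)
    qed
    finally show "hf x y \<le> (\<Sum>j\<le>k. Bf j * (1 + D) ^ j / fact j)" .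
  qed
qed

end

lemma sup_ge: "bdd_above (F x ` Y) \<Longrightarrow> y \<in> Y \<Longrightarrow> (F x y :: real) \<le> (SUP y\<in>Y. F x y)"
  by (rule cSUP_upper)

lemma sup_lip_one:
  fixes F :: "'a \<Rightarrow> 'b \<Rightarrow> real"
  assumes Y: "Y \<noteq> {}" and bdd: "bdd_above (F x ` Y)"
    and lip: "\<And>y. y \<in> Y \<Longrightarrow> (F x' y - a x') - (F x y - a x) \<le> K"
  shows "(SUP y\<in>Y. F x' y) - a x' - ((SUP y\<in>Y. F x y) - a x) \<le> K"
proof -
  have "(SUP y\<in>Y. F x' y) \<le> (SUP y\<in>Y. F x y) - a x + a x' + K"
  proof (rule cSUP_least[OF Y])
    fix y assume y: "y \<in> Y"
    have "F x y \<le> (SUP y\<in>Y. F x y)" by (rule cSUP_upper[OF y bdd])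
    then show "F x' y \<le> (SUP y\<in>Y. F x y) - a x + a x' + K" using lip[OF y] by linarith
  qed
  then show ?thesis by linarith
qed

lemma sup_lip:
  fixes F :: "'a::real_normed_vector \<Rightarrow> 'b \<Rightarrow> real"
  assumes Y: "Y \<noteq> {}" and bdd: "\<And>x. x \<in> X \<Longrightarrow> bdd_above (F x ` Y)"
    and lip: "\<And>y x x'. y \<in> Y \<Longrightarrow> x \<in> X \<Longrightarrow> x' \<in> X \<Longrightarrow> \<bar>(F x' y - a x') - (F x y - a x)\<bar> \<le> K * norm (x' - x)"
    and x: "x \<in> X" "x' \<in> X"
  shows "\<bar>((SUP y\<in>Y. F x' y) - a x') - ((SUP y\<in>Y. F x y) - a x)\<bar> \<le> K * norm (x' - x)"
proof -
  have 1: "(SUP y\<in>Y. F x' y) - a x' - ((SUP y\<in>Y. F x y) - a x) \<le> K * norm (x' - x)"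
  proof (rule sup_lip_one[where F=F and x=x, OF Y bdd[OF x(1)]])
    fix y assume y: "y \<in> Y"
    have "\<bar>(F x' y - a x') - (F x y - a x)\<bar> \<le> K * norm (x' - x)" by (rule lip[OF y x])
    then show "F x' y - a x' - (F x y - a x) \<le> K * norm (x' - x)" by (simp add: abs_le_iff)
  qed
  have 2: "(SUP y\<in>Y. F x y) - a x - ((SUP y\<in>Y. F x' y) - a x') \<le> K * norm (x' - x)"
  proof (rule sup_lip_one[where F=F and x=x', OF Y bdd[OF x(2)]])
    fix y assume y: "y \<in> Y"
    have "\<bar>(F x' y - a x') - (F x y - a x)\<bar> \<le> K * norm (x' - x)" by (rule lip[OF y x])
    then show "F x y - a x - (F x' y - a x') \<le> K * norm (x' - x)" by (simp add: abs_le_iff)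
  qed
  show ?thesis using 1 2 by (simp add: abs_le_iff)
qed

lemma sup_wc:
  fixes F :: "'a::real_inner \<Rightarrow> 'b \<Rightarrow> real"
  assumes Y: "Y \<noteq> {}" and bdd: "\<And>x. x \<in> X \<Longrightarrow> bdd_above (F x ` Y)"
    and wcF: "\<And>y. y \<in> Y \<Longrightarrow> wc (\<lambda>x. F x y) X c"
  shows "wc (\<lambda>x. SUP y\<in>Y. F x y) X c"
  unfolding wc_def
proof (intro ballI allI impI)
  fix u v and t :: real assume uv: "u \<in> X" "v \<in> X" and t: "0 \<le> t" "t \<le> 1"
  show "(SUP y\<in>Y. F (u + t *\<^sub>R (v - u)) y) \<le> (1 - t) * (SUP y\<in>Y. F u y) + t * (SUP y\<in>Y. F v y) + c / 2 * t * (1 - t) * (norm (v - u))\<^sup>2"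
  proof (rule cSUP_least[OF Y])
    fix y assume y: "y \<in> Y"
    have a: "F (u + t *\<^sub>R (v - u)) y \<le> (1 - t) * F u y + t * F v y + c / 2 * t * (1 - t) * (norm (v - u))\<^sup>2"
      using wcF[OF y] uv t unfolding wc_def by blast
    have b: "(1 - t) * F u y \<le> (1 - t) * (SUP y\<in>Y. F u y)"
      using cSUP_upper[OF y bdd[OF uv(1)]] t by (intro mult_left_mono) auto
    have c: "t * F v y \<le> t * (SUP y\<in>Y. F v y)"
      using cSUP_upper[OF y bdd[OF uv(2)]] t by (intro mult_left_mono) auto
    show "F (u + t *\<^sub>R (v - u)) y \<le> (1 - t) * (SUP y\<in>Y. F u y) + t * (SUP y\<in>Y. F v y) + c / 2 * t * (1 - t) * (norm (v - u))\<^sup>2"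
      using a b c by linarith
  qed
qed

lemma wc_mono: "wc \<psi> X c \<Longrightarrow> c \<le> c' \<Longrightarrow> wc \<psi> X c'"
  unfolding wc_def
proof (intro ballI allI impI)
  fix u v and t :: real
  assume w: "\<forall>u\<in>X. \<forall>v\<in>X. \<forall>t. 0 \<le> t \<longrightarrow> t \<le> 1 \<longrightarrow> \<psi> (u + t *\<^sub>R (v - u)) \<le> (1 - t) * \<psi> u + t * \<psi> v + c / 2 * t * (1 - t) * (norm (v - u))\<^sup>2"
    and cc: "c \<le> c'" and uv: "u \<in> X" "v \<in> X" and t: "0 \<le> t" "t \<le> 1"
  have "c / 2 * t * (1 - t) * (norm (v - u))\<^sup>2 \<le> c' / 2 * t * (1 - t) * (norm (v - u))\<^sup>2"
    using cc t by (intro mult_right_mono) auto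
  then show "\<psi> (u + t *\<^sub>R (v - u)) \<le> (1 - t) * \<psi> u + t * \<psi> v + c' / 2 * t * (1 - t) * (norm (v - u))\<^sup>2"
    using w uv t by fastforce
qed

lemma wc_cong: "convex X \<Longrightarrow> (\<And>x. x \<in> X \<Longrightarrow> g x = h x) \<Longrightarrow> wc g X c \<Longrightarrow> wc h X c"
  unfolding wc_def
proof (intro ballI allI impI)
  fix u v and t :: real
  assume X: "convex X" and e: "\<And>x. x \<in> X \<Longrightarrow> g x = h x"
    and w: "\<forall>u\<in>X. \<forall>v\<in>X. \<forall>t. 0 \<le> t \<longrightarrow> t \<le> 1 \<longrightarrow> g (u + t *\<^sub>R (v - u)) \<le> (1 - t) * g u + t * g v + c / 2 * t * (1 - t) * (norm (v - u))\<^sup>2"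
    and uv: "u \<in> X" "v \<in> X" and t: "0 \<le> t" "t \<le> 1"
  have "u + t *\<^sub>R (v - u) \<in> X" using seg_in[OF X uv t] .
  then show "h (u + t *\<^sub>R (v - u)) \<le> (1 - t) * h u + t * h v + c / 2 * t * (1 - t) * (norm (v - u))\<^sup>2"
    using w uv t e by (metis)
qed

lemma moreau_cong: "(\<And>u. u \<in> X \<Longrightarrow> \<psi>1 u = \<psi>2 u) \<Longrightarrow> moreau \<psi>1 X lb = moreau \<psi>2 X lb"
  unfolding moreau_def by (intro ext) (simp cong: image_cong)

lemma lb_arith:
  fixes c0 G n0 nu q lam L :: real
  assumes "c0 + gi - lam * q\<^sup>2 / 2 \<le> fu" "- (G * (nu + n0)) \<le> gi" "lam * q\<^sup>2 \<le> L * (nu + n0)\<^sup>2"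
  shows "(c0 - G * n0 - L / 2 * n0\<^sup>2) - (G + L * n0) * nu - L / 2 * nu\<^sup>2 \<le> fu"
proof -
  have e1: "L * (nu + n0)\<^sup>2 = L * nu\<^sup>2 + 2 * (L * n0 * nu) + L * n0\<^sup>2" by (simp add: power2_eq_square algebra_simps)
  have e2: "(G + L * n0) * nu = G * nu + L * n0 * nu" by (simp add: algebra_simps)
  have e3: "G * (nu + n0) = G * nu + G * n0" by (simp add: algebra_simps)
  show ?thesis using assms unfolding e1 e2 e3 by (simp add: field_simps)
qed

lemma lbq_mono: "lbq g X L \<Longrightarrow> (\<And>u. u \<in> X \<Longrightarrow> g u \<le> h u) \<Longrightarrow> lbq h X L"
  unfolding lbq_def by (meson order_trans)

context prob
begin

lemma lb_f:
  assumes L: "lam \<le> L"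
  shows "lbq (\<lambda>u. f u yhat) X L"
proof -
  obtain x0 where x0: "x0 \<in> X" using Xne by blast
  define g where "g = Gx x0 yhat"
  show ?thesis unfolding lbq_def
  proof (intro exI ballI)
    fix u assume u: "u \<in> X"
    have a: "f x0 yhat + g \<bullet> (u - x0) - lam * (norm (u - x0))\<^sup>2 / 2 \<le> f u yhat"
      unfolding g_def by (rule f_lb[OF yhat x0 u])
    have q: "norm (u - x0) \<le> norm u + norm x0" by (rule norm_triangle_ineq4)
    have b: "- (norm g * (norm u + norm x0)) \<le> g \<bullet> (u - x0)"
    proof -
      have "\<bar>g \<bullet> (u - x0)\<bar> \<le> norm g * norm (u - x0)" by (rule Cauchy_Schwarz_ineq2)
      also have "\<dots> \<le> norm g * (norm u + norm x0)" using q by (intro mult_left_mono) auto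
      finally show ?thesis by (simp add: abs_le_iff)
    qed
    have c: "lam * (norm (u - x0))\<^sup>2 \<le> L * (norm u + norm x0)\<^sup>2"
      using q L nonneg(1) by (intro mult_mono power_mono) auto
    show "(f x0 yhat - norm g * norm x0 - L / 2 * (norm x0)\<^sup>2) - (norm g + L * norm x0) * norm u - L / 2 * (norm u)\<^sup>2 \<le> f u yhat"
      by (rule lb_arith[OF a b c])
  qed
qed

end

lemma Sup_unbounded_eq:
  fixes S T :: "real set"
  assumes "\<not> bdd_above S" "\<not> bdd_above T"
  shows "Sup S = Sup T"
proof -
  have "(\<lambda>z. \<forall>x\<in>S. x \<le> z) = (\<lambda>z. \<forall>x\<in>T. x \<le> z)"
  proof (intro ext iffI)
    fix z assume "\<forall>x\<in>S. x \<le> z" then have "bdd_above S" unfolding bdd_above_def by blast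
    then show "\<forall>x\<in>T. x \<le> z" using assms by blast
  next
    fix z assume "\<forall>x\<in>T. x \<le> z" then have "bdd_above T" unfolding bdd_above_def by blast
    then show "\<forall>x\<in>S. x \<le> z" using assms by blast
  qed
  then show ?thesis unfolding Sup_real_def by simp
qed

lemma grad_const_moreau:
  fixes C :: real and X :: "'a::euclidean_space set"
  assumes X: "convex X" "X \<noteq> {}" and L: "L > 0" and x: "x \<in> X"
  shows "grad (moreau (\<lambda>_. C) X (2 * L)) x = 0"
proof -
  have ctx: "moreau_ctx (\<lambda>_. C) X L"
    unfolding moreau_ctx_def
  proof (intro conjI X L)
    show "wc (\<lambda>_. C) X L" unfolding wc_def
    proof (intro ballI allI impI)
      fix u v and t :: real assume "u \<in> X" "v \<in> X" "0 \<le> t" "t \<le> 1"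
      then have "0 \<le> L / 2 * t * (1 - t) * (norm (v - u))\<^sup>2" using L by simp
      moreover have "(1 - t) * C + t * C = C" by (simp add: algebra_simps)
      ultimately show "C \<le> (1 - t) * C + t * C + L / 2 * t * (1 - t) * (norm (v - u))\<^sup>2" by linarith
    qed
    show "lbq (\<lambda>_. C) X L" unfolding lbq_def
      by (rule exI[of _ C], rule exI[of _ 0]) (use L in simp)
  qed
  interpret moreau_ctx "\<lambda>_. C" X L by (rule ctx)
  obtain p s where ps: "\<forall>u\<in>X. L / 2 * (norm (u - p))\<^sup>2 \<le> Fm (\<lambda>_. C) (2 * L) x u - moreau (\<lambda>_. C) X (2 * L) x"
      "grad (moreau (\<lambda>_. C) X (2 * L)) x = (2 * L) *\<^sub>R (x - p)"
    using prox_grad[of x] by blast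
  have Mge: "C \<le> moreau (\<lambda>_. C) X (2 * L) x"
    by (rule M_ge) (use L in \<open>simp add: F_eq\<close>)
  have "L / 2 * (norm (x - p))\<^sup>2 \<le> Fm (\<lambda>_. C) (2 * L) x x - moreau (\<lambda>_. C) X (2 * L) x" using ps(1) x by blast
  also have "\<dots> \<le> 0" using Mge by (simp add: F_eq)
  finally have "(norm (x - p))\<^sup>2 \<le> 0" using L by (simp add: mult_le_0_iff)
  then have "x = p" by simp
  then show ?thesis using ps(2) by simp
qed

lemma lin_helper: "(R::real) = 4 * m + 8 * q + 4 * e \<Longrightarrow> K2 = 4 * m + 4 * q \<Longrightarrow> 0 \<le> q \<Longrightarrow> 0 \<le> e \<Longrightarrow> K2 \<le> R"
  by linarith

context prob
begin

theorem main:
  fixes eps :: real and xstar :: 'a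
  assumes xstar: "xstar \<in> X"
    and small: "norm (grad (moreau (\<lambda>x. SUP y\<in>Y. \<Sum>j\<le>k. Dy j x yhat (replicate j (y - yhat)) / fact j) X
                   (2 * (lam + (if k \<ge> 1 then 2 * tau * D ^ k / fact k else 0)))) xstar) \<le> eps"
  shows "norm (grad (moreau (\<lambda>x. SUP y\<in>Y. f x y) X
                   (2 * (lam + (if k \<ge> 1 then 2 * tau * D ^ k / fact k else 0)))) xstar
             - grad (moreau (\<lambda>x. SUP y\<in>Y. \<Sum>j\<le>k. Dy j x yhat (replicate j (y - yhat)) / fact j) X
                   (2 * (lam + (if k \<ge> 1 then 2 * tau * D ^ k / fact k else 0)))) xstar)
         \<le> (if k \<ge> 1 then 4 * (mu * D + 2 * sigma * D ^ k / fact k + eps)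
            else 4 * (min (mu * D) (2 * sigma) + eps))"
proof -
  define Lb where "Lb = lam + (if k \<ge> 1 then 2 * tau * D ^ k / fact k else 0)"
  define \<phi> where "\<phi> = (\<lambda>x. SUP y\<in>Y. f x y)"
  define h\<phi> where "h\<phi> = (\<lambda>x. SUP y\<in>Y. hf x y)"
  define RHS where "RHS = (if k \<ge> 1 then 4 * (mu * D + 2 * sigma * D ^ k / fact k + eps)
            else 4 * (min (mu * D) (2 * sigma) + eps))"
  have sm: "norm (grad (moreau h\<phi> X (2 * Lb)) xstar) \<le> eps" using small unfolding h\<phi>_def Lb_def .
  have eps0: "0 \<le> eps" using sm norm_ge_zero order_trans by blast
  have Dk0: "0 \<le> D ^ k / fact k" using D0 by simp
  have sDk0: "0 \<le> sigma * D ^ k / fact k"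
    by (intro divide_nonneg_pos mult_nonneg_nonneg zero_le_power) (use nonneg D0 in auto)
  have tDk0: "0 \<le> tau * D ^ k / fact k"
    by (intro divide_nonneg_pos mult_nonneg_nonneg zero_le_power) (use nonneg D0 in auto)
  have RHS0: "0 \<le> RHS" unfolding RHS_def using eps0 nonneg D0 sDk0 by auto
  have Lb0: "0 \<le> Lb" unfolding Lb_def using nonneg tDk0 by auto
  have goal: "norm (grad (moreau \<phi> X (2 * Lb)) xstar - grad (moreau h\<phi> X (2 * Lb)) xstar) \<le> RHS"
  proof (cases "Lb = 0")
    case True
    then show ?thesis using grad_moreau_zero[of \<phi> X xstar] grad_moreau_zero[of h\<phi> X xstar] RHS0 by simp
  next
    case False
    then have Lbp: "Lb > 0" using Lb0 by simp
    have hf_bdd': "\<And>x. x \<in> X \<Longrightarrow> bdd_above ((\<lambda>y. hf x y) ` Y)" using hf_bdd .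
    have lbf: "lbq (\<lambda>u. f u yhat) X Lb" by (rule lb_f) (use nonneg tDk0 in \<open>auto simp: Lb_def\<close>)
    have h_ge: "f u yhat \<le> h\<phi> u" if "u \<in> X" for u
    proof -
      have "f u yhat = hf u yhat" using hf_yhat[OF that] by simp
      also have "\<dots> \<le> h\<phi> u" unfolding h\<phi>_def by (rule cSUP_upper[OF yhat hf_bdd'[OF that]])
      finally show ?thesis .
    qed
    have ctx2_of: "moreau_ctx h\<phi> X Lb" if "wc h\<phi> X Lb"
      unfolding moreau_ctx_def using X(1) Xne Lbp that lbq_mono[OF lbf h_ge] by blast
    show ?thesis
    proof (cases "k \<ge> 1")
      case k: True
      have LbE: "Lb = lam + 2 * tau * D ^ k / fact k" unfolding Lb_def using k by simp
      have f_bdd': "\<And>x. x \<in> X \<Longrightarrow> bdd_above ((\<lambda>y. f x y) ` Y)" using f_bdd[OF k] .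
      have wc1: "wc \<phi> X Lb"
        unfolding \<phi>_def by (rule wc_mono[OF sup_wc[OF Yne f_bdd' f_wc]]) (use tDk0 LbE in auto)
      have wc2: "wc h\<phi> X Lb"
        unfolding h\<phi>_def LbE by (rule sup_wc[OF Yne hf_bdd' hat_wc[OF k]])
      have f_ge: "f u yhat \<le> \<phi> u" if "u \<in> X" for u
        unfolding \<phi>_def by (rule cSUP_upper[OF yhat f_bdd'[OF that]])
      have ctx1: "moreau_ctx \<phi> X Lb"
        unfolding moreau_ctx_def using X(1) Xne Lbp wc1 lbq_mono[OF lbf f_ge] by blast
      define K where "K = 2 * (mu * D) + 2 * sigma * D ^ k / fact k"
      have lip: "\<bar>(\<phi> u - h\<phi> u) - (\<phi> v - h\<phi> v)\<bar> \<le> K * norm (u - v)" if uv: "u \<in> X" "v \<in> X" for u v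
      proof -
        have L1: "\<bar>(\<phi> u - f u yhat) - (\<phi> v - f v yhat)\<bar> \<le> (mu * D) * norm (u - v)"
          unfolding \<phi>_def
          proof (rule sup_lip[where a="\<lambda>x. f x yhat"])
            show "Y \<noteq> {}" by (rule Yne)
            show "\<And>x. x \<in> X \<Longrightarrow> bdd_above ((\<lambda>y. f x y) ` Y)" by (rule f_bdd')
            show "\<And>y x x'. y \<in> Y \<Longrightarrow> x \<in> X \<Longrightarrow> x' \<in> X \<Longrightarrow> \<bar>(f x' y - f x' yhat) - (f x y - f x yhat)\<bar> \<le> (mu * D) * norm (x' - x)" by (rule f_diff_lip)
            show "v \<in> X" "u \<in> X" by (rule uv)+
          qed
        have L2: "\<bar>(h\<phi> u - f u yhat) - (h\<phi> v - f v yhat)\<bar> \<le> (mu * D + 2 * sigma * D ^ k / fact k) * norm (u - v)"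
          unfolding h\<phi>_def
          proof (rule sup_lip[where a="\<lambda>x. f x yhat"])
            show "Y \<noteq> {}" by (rule Yne)
            show "\<And>x. x \<in> X \<Longrightarrow> bdd_above ((\<lambda>y. hf x y) ` Y)" by (rule hf_bdd')
            show "\<And>y x x'. y \<in> Y \<Longrightarrow> x \<in> X \<Longrightarrow> x' \<in> X \<Longrightarrow> \<bar>(hf x' y - f x' yhat) - (hf x y - f x yhat)\<bar> \<le> (mu * D + 2 * sigma * D ^ k / fact k) * norm (x' - x)" by (rule hat_lip)
            show "v \<in> X" "u \<in> X" by (rule uv)+
          qed
        have e: "(\<phi> u - h\<phi> u) - (\<phi> v - h\<phi> v) = ((\<phi> u - f u yhat) - (\<phi> v - f v yhat)) - ((h\<phi> u - f u yhat) - (h\<phi> v - f v yhat))"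
          by simp
        have "\<bar>(\<phi> u - h\<phi> u) - (\<phi> v - h\<phi> v)\<bar> \<le> (mu * D) * norm (u - v) + (mu * D + 2 * sigma * D ^ k / fact k) * norm (u - v)"
          unfolding e using L1 L2 by (simp add: abs_le_iff) 
        also have "\<dots> = K * norm (u - v)" unfolding K_def by (simp add: algebra_simps)
        finally show ?thesis .
      qed
      have K0: "0 \<le> K" unfolding K_def using nonneg D0 sDk0 by simp
      have "norm (grad (moreau \<phi> X (2 * Lb)) xstar - grad (moreau h\<phi> X (2 * Lb)) xstar) \<le> 2 * K"
        by (rule compare[OF ctx1 ctx2_of[OF wc2] K0 lip])
      also have "\<dots> \<le> RHS"
      proof -
        have e: "2 * sigma * D ^ k / fact k = 2 * (sigma * D ^ k / fact k)" by simp
        have "RHS = 4 * (mu * D + 2 * (sigma * D ^ k / fact k) + eps)" unfolding RHS_def e using k by simp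
        also have "\<dots> = 4 * (mu * D) + 8 * (sigma * D ^ k / fact k) + 4 * eps" by (simp add: algebra_simps)
        finally have "RHS = 4 * (mu * D) + 8 * (sigma * D ^ k / fact k) + 4 * eps" .
        moreover have "2 * K = 4 * (mu * D) + 4 * (sigma * D ^ k / fact k)" unfolding K_def e by simp
        ultimately show ?thesis using sDk0 eps0 by (rule lin_helper)
      qed
      finally show ?thesis .
    next
      case k: False
      then have k0: "k = 0" by simp
      have LbE: "Lb = lam" unfolding Lb_def using k by simp
      have hfE: "hf x y = Dy 0 x yhat []" for x y using k0 by simp
      have hphiE: "h\<phi> x = f x yhat" if "x \<in> X" for x
        unfolding h\<phi>_def hfE using Yne Dy0[OF that yhat] by simp
      have wc2: "wc h\<phi> X Lb"
        unfolding LbE by (rule wc_cong[OF X(1) _ f_wc[OF yhat]]) (simp add: hphiE)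
      have ctx2: "moreau_ctx h\<phi> X Lb" by (rule ctx2_of[OF wc2])
      have fl: "\<bar>f x' y - f x y\<bar> \<le> sigma * norm (x' - x)" if "y \<in> Y" "x \<in> X" "x' \<in> X" for x x' y
        using Dy_k_lip[of x x' y "[]"] that k0 Dy0 by simp
      show ?thesis
      proof (cases "\<forall>x\<in>X. bdd_above ((\<lambda>y. f x y) ` Y)")
        case bdd: True
        have f_bdd': "\<And>x. x \<in> X \<Longrightarrow> bdd_above ((\<lambda>y. f x y) ` Y)" using bdd by (rule bspec)
        have wc1: "wc \<phi> X Lb"
          unfolding \<phi>_def LbE by (rule sup_wc[OF Yne f_bdd' f_wc])
        have f_ge: "f u yhat \<le> \<phi> u" if "u \<in> X" for u
          unfolding \<phi>_def by (rule cSUP_upper[OF yhat f_bdd'[OF that]])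
        have ctx1: "moreau_ctx \<phi> X Lb"
          unfolding moreau_ctx_def using X(1) Xne Lbp wc1 lbq_mono[OF lbf f_ge] by blast
        have lipA: "\<bar>(\<phi> u - h\<phi> u) - (\<phi> v - h\<phi> v)\<bar> \<le> (mu * D) * norm (u - v)" if uv: "u \<in> X" "v \<in> X" for u v
        proof -
          have "\<bar>(\<phi> u - f u yhat) - (\<phi> v - f v yhat)\<bar> \<le> (mu * D) * norm (u - v)"
            unfolding \<phi>_def
            proof (rule sup_lip[where a="\<lambda>x. f x yhat"])
              show "Y \<noteq> {}" by (rule Yne)
              show "\<And>x. x \<in> X \<Longrightarrow> bdd_above ((\<lambda>y. f x y) ` Y)" by (rule f_bdd')
              show "\<And>y x x'. y \<in> Y \<Longrightarrow> x \<in> X \<Longrightarrow> x' \<in> X \<Longrightarrow> \<bar>(f x' y - f x' yhat) - (f x y - f x yhat)\<bar> \<le> (mu * D) * norm (x' - x)" by (rule f_diff_lip)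
              show "v \<in> X" "u \<in> X" by (rule uv)+
            qed
          then show ?thesis using hphiE[OF uv(1)] hphiE[OF uv(2)] by simp
        qed
        have lipB: "\<bar>(\<phi> u - h\<phi> u) - (\<phi> v - h\<phi> v)\<bar> \<le> (2 * sigma) * norm (u - v)" if uv: "u \<in> X" "v \<in> X" for u v
        proof -
          have a: "\<bar>(\<phi> u - 0) - (\<phi> v - 0)\<bar> \<le> sigma * norm (u - v)"
            unfolding \<phi>_def
            proof (rule sup_lip[where a="\<lambda>x. 0"])
              show "Y \<noteq> {}" by (rule Yne)
              show "\<And>x. x \<in> X \<Longrightarrow> bdd_above ((\<lambda>y. f x y) ` Y)" by (rule f_bdd')
              show "\<And>y x x'. y \<in> Y \<Longrightarrow> x \<in> X \<Longrightarrow> x' \<in> X \<Longrightarrow> \<bar>(f x' y - 0) - (f x y - 0)\<bar> \<le> sigma * norm (x' - x)" using fl by simp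
              show "v \<in> X" "u \<in> X" by (rule uv)+
            qed
          have b: "\<bar>f u yhat - f v yhat\<bar> \<le> sigma * norm (u - v)" using fl[OF yhat uv(2) uv(1)] .
          show ?thesis using a b hphiE[OF uv(1)] hphiE[OF uv(2)] by (simp add: abs_le_iff)
        qed
        have A: "norm (grad (moreau \<phi> X (2 * Lb)) xstar - grad (moreau h\<phi> X (2 * Lb)) xstar) \<le> 2 * (mu * D)"
          by (rule compare[OF ctx1 ctx2 _ lipA]) (use nonneg D0 in simp)
        have B: "norm (grad (moreau \<phi> X (2 * Lb)) xstar - grad (moreau h\<phi> X (2 * Lb)) xstar) \<le> 2 * (2 * sigma)"
          by (rule compare[OF ctx1 ctx2 _ lipB]) (use nonneg in simp)
        have muD0: "0 \<le> mu * D" using nonneg(2) D0 by (rule mult_nonneg_nonneg)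
        show ?thesis
        proof (cases "mu * D \<le> 2 * sigma")
          case True
          then have "RHS = 4 * (mu * D) + 4 * eps" unfolding RHS_def using k by (simp add: min_def)
          then show ?thesis using A muD0 eps0 by linarith
        next
          case False
          then have "RHS = 4 * (2 * sigma) + 4 * eps" unfolding RHS_def using k by (simp add: min_def)
          then show ?thesis using B nonneg(3) eps0 by linarith
        qed
      next
        case nb: False
        then obtain x1 where x1: "x1 \<in> X" "\<not> bdd_above ((\<lambda>y. f x1 y) ` Y)" by auto
        have allnb: "\<not> bdd_above ((\<lambda>y. f x y) ` Y)" if x: "x \<in> X" for x
        proof
          assume "bdd_above ((\<lambda>y. f x y) ` Y)"
          then obtain M where M: "\<And>y. y \<in> Y \<Longrightarrow> f x y \<le> M" by (auto simp: bdd_above_def)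
          have "bdd_above ((\<lambda>y. f x1 y) ` Y)"
          proof (rule bdd_aboveI2[where M="M + sigma * norm (x1 - x)"])
            fix y assume y: "y \<in> Y"
            show "f x1 y \<le> M + sigma * norm (x1 - x)" using fl[OF y x x1(1)] M[OF y] by (simp add: abs_le_iff)
          qed
          then show False using x1(2) by blast
        qed
        define C where "C = (SUP y\<in>Y. f x1 y)"
        have phiC: "\<phi> u = C" if "u \<in> X" for u
          unfolding \<phi>_def C_def by (rule Sup_unbounded_eq[OF allnb[OF that] x1(2)])
        have "moreau \<phi> X (2 * Lb) = moreau (\<lambda>_. C) X (2 * Lb)" by (rule moreau_cong) (rule phiC)
        then have g0: "grad (moreau \<phi> X (2 * Lb)) xstar = 0"
          using grad_const_moreau[OF X(1) Xne Lbp xstar] by simp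
        have muD0: "0 \<le> mu * D" using nonneg(2) D0 by (rule mult_nonneg_nonneg)
        have mn: "0 \<le> min (mu * D) (2 * sigma)" using muD0 nonneg(3) by simp
        have "RHS = 4 * min (mu * D) (2 * sigma) + 4 * eps" unfolding RHS_def using k by simp
        moreover have "norm (0 - grad (moreau h\<phi> X (2 * Lb)) xstar) = norm (grad (moreau h\<phi> X (2 * Lb)) xstar)" by simp
        ultimately show ?thesis unfolding g0 using sm mn eps0 by linarith
      qed
    qed
  qed
  show ?thesis using goal unfolding Lb_def \<phi>_def h\<phi>_def RHS_def .
qed

end

theorem proposition2:
  fixes f :: "'a::euclidean_space \<Rightarrow> 'b::euclidean_space \<Rightarrow> real"
    and X :: "'a set" and Y :: "'b set"
    and D lam mu sigma tau eps :: real and rho :: ereal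
    and k :: nat and yhat :: "'b" and xstar :: "'a"
    and Gx :: "'a \<Rightarrow> 'b \<Rightarrow> 'a"
    and Dy :: "nat \<Rightarrow> 'a \<Rightarrow> 'b \<Rightarrow> 'b list \<Rightarrow> real"
    and Dxy :: "'a \<Rightarrow> 'b \<Rightarrow> 'a \<Rightarrow> 'b list \<Rightarrow> real"
  assumes X: "convex X" "interior X \<noteq> {}"
    and Y: "convex Y" "compact Y" "interior Y \<noteq> {}"
    and D: "diameter Y \<le> D"
    and yhat: "yhat \<in> Y"
    and nonneg: "0 \<le> lam" "0 \<le> mu" "0 \<le> sigma" "0 \<le> tau"
    \<comment> \<open>(i) gradient in x exists and is Lipschitz\<close>
    and Gx_deriv: "\<And>x y. x \<in> X \<Longrightarrow> y \<in> Y \<Longrightarrow>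
          ((\<lambda>x'. f x' y) has_derivative (\<lambda>h. Gx x y \<bullet> h)) (at x within X)"
    and Gx_lip: "\<And>x x' y y'. x \<in> X \<Longrightarrow> x' \<in> X \<Longrightarrow> y \<in> Y \<Longrightarrow> y' \<in> Y \<Longrightarrow>
          norm (Gx x' y' - Gx x y) \<le> lam * norm (x' - x) + mu * norm (y' - y)"
    \<comment> \<open>(ii) y-derivatives up to order k exist (Dy j is the j-th order tensor)\<close>
    and Dy0: "\<And>x y. x \<in> X \<Longrightarrow> y \<in> Y \<Longrightarrow> Dy 0 x y [] = f x y"
    and Dy_deriv: "\<And>j x y vs. j < k \<Longrightarrow> x \<in> X \<Longrightarrow> y \<in> Y \<Longrightarrow> length vs = j \<Longrightarrow>
          ((\<lambda>y'. Dy j x y' vs) has_derivative (\<lambda>h. Dy (Suc j) x y (h # vs))) (at y within Y)"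
    and Dy_lip: "\<And>x x' y y'. x \<in> X \<Longrightarrow> x' \<in> X \<Longrightarrow> y \<in> Y \<Longrightarrow> y' \<in> Y \<Longrightarrow>
          ereal (tnorm k (\<lambda>vs. Dy k x' y' vs - Dy k x y vs))
            \<le> rho * ereal (norm (y' - y)) + ereal (sigma * norm (x' - x))"
    and Dy_ac: "\<And>y. y \<in> Y \<Longrightarrow> tensor_abs_cont_on X (\<lambda>x. Dy k x y)"
    \<comment> \<open>(iii) for k \<ge> 1\<close>
    and iii: "k \<ge> 1 \<Longrightarrow>
          (\<forall>x\<in>X. \<forall>y\<in>Y. \<forall>vs. length vs = k \<longrightarrow>
              ((\<lambda>x'. Dy k x' y vs) has_derivative (\<lambda>u. Dxy x y u vs)) (at x within X))
        \<and> (\<forall>x\<in>X. \<forall>x'\<in>X. \<forall>y\<in>Y.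
              tnorm_x k (\<lambda>u vs. Dxy x' y u vs - Dxy x y u vs) \<le> tau * norm (x' - x))
        \<and> {(x, y). x \<in> X \<and> y \<in> Y \<and>
              \<not> (\<forall>u vs. length vs = k \<longrightarrow> (\<lambda>x'. Dxy x' y u vs) differentiable (at x within X))}
            \<in> sets lebesgue
        \<and> (\<forall>x\<in>X. \<forall>vs. continuous_on Y (\<lambda>y. Dy k x y vs))"
    and xstar: "xstar \<in> X"
    and small: "norm (grad (moreau (\<lambda>x. SUP y\<in>Y. \<Sum>j\<le>k. Dy j x yhat (replicate j (y - yhat)) / fact j) X
                   (2 * (lam + (if k \<ge> 1 then 2 * tau * D ^ k / fact k else 0)))) xstar) \<le> eps"
  shows "norm (grad (moreau (\<lambda>x. SUP y\<in>Y. f x y) X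
                   (2 * (lam + (if k \<ge> 1 then 2 * tau * D ^ k / fact k else 0)))) xstar
             - grad (moreau (\<lambda>x. SUP y\<in>Y. \<Sum>j\<le>k. Dy j x yhat (replicate j (y - yhat)) / fact j) X
                   (2 * (lam + (if k \<ge> 1 then 2 * tau * D ^ k / fact k else 0)))) xstar)
         \<le> (if k \<ge> 1 then 4 * (mu * D + 2 * sigma * D ^ k / fact k + eps)
            else 4 * (min (mu * D) (2 * sigma) + eps))"
proof -
  have i1: "\<And>x y vs. k \<ge> 1 \<Longrightarrow> x \<in> X \<Longrightarrow> y \<in> Y \<Longrightarrow> length vs = k \<Longrightarrow>
              ((\<lambda>x'. Dy k x' y vs) has_derivative (\<lambda>u. Dxy x y u vs)) (at x within X)"
    using iii by blast
  have i2: "\<And>x x' y. k \<ge> 1 \<Longrightarrow> x \<in> X \<Longrightarrow> x' \<in> X \<Longrightarrow> y \<in> Y \<Longrightarrow>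
              tnorm_x k (\<lambda>u vs. Dxy x' y u vs - Dxy x y u vs) \<le> tau * norm (x' - x)"
    using iii by blast
  interpret P: prob f X Y D lam mu sigma tau rho k yhat Gx Dy Dxy
    by (rule prob.intro; (rule X Y D yhat nonneg Gx_deriv Gx_lip Dy0 Dy_deriv Dy_lip i1 i2 | assumption)+)
  show ?thesis by (rule P.main[OF xstar small])
qed

end
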